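(* Let $d\ge 3$, let $D$ be a finite subset of $\mathbb{Z}^d$ and let $C$ be a closed convex subset of $\ell^1(D)$. For any integer $t\ge1$, $$\inf_{x\in\overline{D}}P_x\Big(\frac1t L^D_t\in C,\ \tau(D,t)<\infty\Big)\le\exp\Big(-t\inf_{h\in C,\,h\ge0}\frac12\mathcal{E}(\sqrt h,D)\Big).$$
   Context: $P_x$ is the law of the discrete-time simple random walk $(S_k)_{k\ge0}$ on $\mathbb{Z}^d$ started at $x$. $L_k(y)=\sum_{j=0}^{k-1}1_{\{S_j=y\}}$ and $L_k(D)=\sum_{y\in D}L_k(y)$. For $t\in\mathbb{N}$, $\tau(D,t)=\inf\{k\ge1: L_k(D)=t\}$, and $L^D_t$ is the function on $D$ given by $L^D_t(x)=L_{\tau(D,t)}(x)$. $\ell^1(D)$ is equipped with the norm $\|f\|_{1,D}=\sum_{x\in D}|f(x)|$. $\overline D=D\cup\{x\in\mathbb{Z}^d:\exists y\in D,\ |x-y|=1\}$. For $f:D\to\mathbb{R}$, $\mathcal{E}(f,D)=\frac{1}{2d}\sum_{y,z\in D,\ |y-z|=1}(f(y)-f(z))^2$ (sum over ordered pairs). The infimum over an empty set is $+\infty$. *)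

theory Defs
  imports "HOL-Probability.Probability"
begin

text \<open>Points of Z^d are functions 'd => int, with 'd a finite index type, d = CARD('d).\<close>

definition adj :: "('d::finite \<Rightarrow> int) \<Rightarrow> ('d \<Rightarrow> int) \<Rightarrow> bool" where
  "adj x y \<longleftrightarrow> (\<Sum>i\<in>UNIV. (x i - y i)^2) = 1"

definition unit_steps :: "('d::finite \<Rightarrow> int) set" where
  "unit_steps = {e. adj e (\<lambda>_. 0)}"

definition srw_steps :: "('d::finite \<Rightarrow> int) stream measure" where
  "srw_steps = stream_space (measure_pmf (pmf_of_set unit_steps))"

definition walk :: "('d::finite \<Rightarrow> int) \<Rightarrow> ('d \<Rightarrow> int) stream \<Rightarrow> nat \<Rightarrow> ('d \<Rightarrow> int)" where
  "walk x \<omega> k = (\<lambda>i. x i + (\<Sum>j<k. (\<omega> !! j) i))"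

definition loc :: "('d::finite \<Rightarrow> int) \<Rightarrow> ('d \<Rightarrow> int) stream \<Rightarrow> nat \<Rightarrow> ('d \<Rightarrow> int) \<Rightarrow> nat" where
  "loc x \<omega> k y = card {j. j < k \<and> walk x \<omega> j = y}"

definition locD :: "('d::finite \<Rightarrow> int) \<Rightarrow> ('d \<Rightarrow> int) stream \<Rightarrow> nat \<Rightarrow> ('d \<Rightarrow> int) set \<Rightarrow> nat" where
  "locD x \<omega> k D = (\<Sum>y\<in>D. loc x \<omega> k y)"

text \<open>tau(D,t) < infinity, and tau(D,t) as the least such k (meaningful only when finite).\<close>
definition tau_fin :: "('d::finite \<Rightarrow> int) \<Rightarrow> ('d \<Rightarrow> int) stream \<Rightarrow> ('d \<Rightarrow> int) set \<Rightarrow> nat \<Rightarrow> bool" where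
  "tau_fin x \<omega> D t \<longleftrightarrow> (\<exists>k\<ge>1. locD x \<omega> k D = t)"

definition tau :: "('d::finite \<Rightarrow> int) \<Rightarrow> ('d \<Rightarrow> int) stream \<Rightarrow> ('d \<Rightarrow> int) set \<Rightarrow> nat \<Rightarrow> nat" where
  "tau x \<omega> D t = (LEAST k. k \<ge> 1 \<and> locD x \<omega> k D = t)"

text \<open>L^D_t as an element of l^1(D), represented as a function vanishing outside D.\<close>
definition locTD :: "('d::finite \<Rightarrow> int) \<Rightarrow> ('d \<Rightarrow> int) stream \<Rightarrow> ('d \<Rightarrow> int) set \<Rightarrow> nat \<Rightarrow> (('d \<Rightarrow> int) \<Rightarrow> real)" where
  "locTD x \<omega> D t = (\<lambda>y. if y \<in> D then real (loc x \<omega> (tau x \<omega> D t) y) else 0)"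

definition closure_nb :: "('d::finite \<Rightarrow> int) set \<Rightarrow> ('d \<Rightarrow> int) set" where
  "closure_nb D = D \<union> {x. \<exists>y\<in>D. adj x y}"

definition energy :: "(('d::finite \<Rightarrow> int) \<Rightarrow> real) \<Rightarrow> ('d \<Rightarrow> int) set \<Rightarrow> real" where
  "energy f D = (1 / (2 * real CARD('d))) *
     (\<Sum>(y,z)\<in>{(y,z). y \<in> D \<and> z \<in> D \<and> adj y z}. (f y - f z)^2)"

text \<open>Subsets of l^1(D): functions vanishing outside D.\<close>
definition l1_set :: "('a \<Rightarrow> real) set \<Rightarrow> 'a set \<Rightarrow> bool" where
  "l1_set C D \<longleftrightarrow> (\<forall>f\<in>C. \<forall>y. y \<notin> D \<longrightarrow> f y = 0)"

definition l1_convex :: "('a \<Rightarrow> real) set \<Rightarrow> bool" where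
  "l1_convex C \<longleftrightarrow> (\<forall>f\<in>C. \<forall>g\<in>C. \<forall>u::real. 0 \<le> u \<and> u \<le> 1 \<longrightarrow> (\<lambda>y. u * f y + (1 - u) * g y) \<in> C)"

definition l1_closed :: "('a \<Rightarrow> real) set \<Rightarrow> 'a set \<Rightarrow> bool" where
  "l1_closed C D \<longleftrightarrow> (\<forall>F g. (\<forall>n. F n \<in> C) \<longrightarrow> (\<forall>y. y \<notin> D \<longrightarrow> g y = 0) \<longrightarrow>
      (\<lambda>n. \<Sum>y\<in>D. \<bar>F n y - g y\<bar>) \<longlonglongrightarrow> 0 \<longrightarrow> g \<in> C)"

end

theory Submission
  imports Defs "HOL-Library.Function_Algebras"
begin


lemma sq_sum_one_int:
  fixes e :: "'d::finite \<Rightarrow> int"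
  assumes "(\<Sum>i\<in>UNIV. (e i)^2) = 1"
  shows "\<exists>i. e = (\<lambda>j. if j = i then 1 else 0) \<or> e = (\<lambda>j. if j = i then -1 else 0)"
proof -
  obtain i where i: "e i \<noteq> 0"
    using assms by (metis (no_types, lifting) power_zero_numeral sum.neutral zero_neq_one)
  have ge: "(e i)^2 \<ge> 1" using i
    by (smt (verit, ccfv_SIG) int_one_le_iff_zero_less power2_less_eq_zero_iff zero_less_power2)
  have split: "(\<Sum>j\<in>UNIV. (e j)^2) = (e i)^2 + (\<Sum>j\<in>UNIV-{i}. (e j)^2)"
    by (simp add: sum.remove)
  have nn: "(\<Sum>j\<in>UNIV-{i}. (e j)^2) \<ge> 0" by (simp add: sum_nonneg)
  have ei: "(e i)^2 = 1" using assms split nn ge by linarith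
  have rest: "(\<Sum>j\<in>UNIV-{i}. (e j)^2) = 0" using assms split ei by linarith
  have z: "\<forall>j\<in>UNIV-{i}. (e j)^2 = 0"
    using sum_nonneg_eq_0_iff[of "UNIV-{i}" "\<lambda>j. (e j)^2"] rest by simp
  have "e i = 1 \<or> e i = -1" using ei by (simp add: power2_eq_1_iff)
  then show ?thesis using z
    by (metis (full_types) DiffI UNIV_I ext singletonD zero_eq_power2)
qed

lemma adj_iff: "adj x y \<longleftrightarrow> x - y \<in> unit_steps"
  by (simp add: adj_def unit_steps_def)

lemma adj_sym: "adj x y \<longleftrightarrow> adj y x"
  unfolding adj_def by (rule arg_cong[where f="\<lambda>s. s = 1"], rule sum.cong, auto simp: power2_commute)

lemma unit_steps_neg: "s \<in> unit_steps \<Longrightarrow> - s \<in> unit_steps"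
  by (simp add: unit_steps_def adj_def)

lemma unit_steps_sub:
  "(unit_steps :: ('d::finite \<Rightarrow> int) set) \<subseteq>
    range (\<lambda>i. (\<lambda>j. if j = i then 1 else 0)) \<union> range (\<lambda>i. (\<lambda>j. if j = i then -1 else 0))"
  using sq_sum_one_int unfolding unit_steps_def adj_def by fastforce

lemma delta_in_unit_steps: "(\<lambda>j. if j = i then 1 else 0) \<in> (unit_steps :: ('d::finite \<Rightarrow> int) set)"
proof -
  have "(\<Sum>j\<in>UNIV. ((\<lambda>j::'d. if j = i then (1::int) else 0) j - 0)^2) = (\<Sum>j\<in>UNIV. if j = i then 1 else 0)"
    by (rule sum.cong) auto
  also have "\<dots> = 1" by simp
  finally show ?thesis by (simp add: unit_steps_def adj_def)
qed

lemma finite_unit_steps: "finite (unit_steps :: ('d::finite \<Rightarrow> int) set)"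
  by (rule finite_subset[OF unit_steps_sub]) auto

lemma unit_steps_ne: "(unit_steps :: ('d::finite \<Rightarrow> int) set) \<noteq> {}"
  using delta_in_unit_steps by blast

lemma card_unit_steps: "card (unit_steps :: ('d::finite \<Rightarrow> int) set) \<le> 2 * CARD('d)"
proof -
  have "card (unit_steps :: ('d::finite \<Rightarrow> int) set) \<le>
     card (range (\<lambda>i::'d. (\<lambda>j. if j = i then (1::int) else 0)) \<union> range (\<lambda>i. (\<lambda>j. if j = i then -1 else 0)))"
    by (rule card_mono[OF _ unit_steps_sub]) auto
  also have "\<dots> \<le> card (range (\<lambda>i::'d. (\<lambda>j. if j = i then (1::int) else 0))) + card (range (\<lambda>i::'d. (\<lambda>j. if j = i then (-1::int) else 0)))"
    by (rule card_Un_le)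
  also have "\<dots> \<le> CARD('d) + CARD('d)"
    by (intro add_mono card_image_le) auto
  finally show ?thesis by simp
qed

lemma zero_notin_unit_steps: "0 \<notin> unit_steps"
  by (simp add: unit_steps_def adj_def)

lemma card_unit_steps_pos: "card (unit_steps :: ('d::finite \<Rightarrow> int) set) > 0"
  using finite_unit_steps unit_steps_ne by (simp add: card_gt_0_iff)

lemma closure_nb_eq: "closure_nb D = D \<union> (\<Union>y\<in>D. (\<lambda>s. y + s) ` unit_steps)"
  unfolding closure_nb_def adj_iff
  by (auto simp: image_iff) (metis add.commute diff_add_cancel, metis add_diff_cancel_left')

lemma finite_closure_nb: "finite D \<Longrightarrow> finite (closure_nb (D :: ('d::finite \<Rightarrow> int) set))"
  unfolding closure_nb_eq using finite_unit_steps by auto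

lemma walk_0[simp]: "walk x \<omega> 0 = x"
  by (simp add: walk_def)

lemma walk_Suc_Cons: "walk x (s ## \<omega>) (Suc k) = walk (x + s) \<omega> k"
  unfolding walk_def by (rule ext) (simp only: sum.lessThan_Suc_shift, simp)



lemma loc_0[simp]: "loc z \<omega> 0 y = 0"
  by (simp add: loc_def)

lemma loc_Suc_Cons: "loc z (s ## \<omega>) (Suc k) y = (if z = y then 1 else 0) + loc (z + s) \<omega> k y"
proof -
  have eq: "{j. j < Suc k \<and> walk z (s ## \<omega>) j = y} =
     (if z = y then {0} else {}) \<union> Suc ` {j. j < k \<and> walk (z + s) \<omega> j = y}"
  proof (rule set_eqI)
    fix j show "j \<in> {j. j < Suc k \<and> walk z (s ## \<omega>) j = y} \<longleftrightarrow>
      j \<in> (if z = y then {0} else {}) \<union> Suc ` {j. j < k \<and> walk (z + s) \<omega> j = y}"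
      by (cases j) (auto simp: walk_Suc_Cons)
  qed
  have fin: "finite (Suc ` {j. j < k \<and> walk (z + s) \<omega> j = y})" by auto
  have dis: "0 \<notin> Suc ` {j. j < k \<and> walk (z + s) \<omega> j = y}" by auto
  have "card {j. j < Suc k \<and> walk z (s ## \<omega>) j = y} =
        (if z = y then 1 else 0) + card (Suc ` {j. j < k \<and> walk (z + s) \<omega> j = y})"
    unfolding eq using fin dis by (auto simp: card_insert_if)
  also have "card (Suc ` {j. j < k \<and> walk (z + s) \<omega> j = y}) = card {j. j < k \<and> walk (z + s) \<omega> j = y}"
    by (rule card_image) auto
  finally show ?thesis by (simp add: loc_def)
qed

lemma locD_0[simp]: "locD z \<omega> 0 D = 0"
  by (simp add: locD_def)

lemma locD_Suc_Cons: "finite D \<Longrightarrow>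
  locD z (s ## \<omega>) (Suc k) D = (if z \<in> D then 1 else 0) + locD (z + s) \<omega> k D"
  by (simp add: locD_def loc_Suc_Cons sum.distrib)

definition good :: "('d::finite \<Rightarrow> int) set \<Rightarrow> (('d \<Rightarrow> int) \<Rightarrow> real) set \<Rightarrow> nat \<Rightarrow> nat \<Rightarrow>
   ('d \<Rightarrow> int) \<Rightarrow> nat \<Rightarrow> (('d \<Rightarrow> int) \<Rightarrow> nat) \<Rightarrow> ('d \<Rightarrow> int) stream \<Rightarrow> bool" where
  "good D C t n z r a \<omega> \<longleftrightarrow> (\<exists>k\<le>n. locD z \<omega> k D = r) \<and>
     (\<lambda>y. if y \<in> D then (real (a y) + real (loc z \<omega> (LEAST k. locD z \<omega> k D = r) y)) / real t else 0) \<in> C"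

lemma good_0: "r \<ge> 1 \<Longrightarrow> \<not> good D C t 0 z r a \<omega>"
  by (simp add: good_def)

lemma good_Suc_Cons:
  assumes D: "finite D" and r: "r \<ge> 1"
  shows "good D C t (Suc n) z r a (s ## \<omega>) \<longleftrightarrow>
    (if z \<in> D then
       (if r = 1 then (\<lambda>y. if y \<in> D then (real (a y) + (if z = y then 1 else 0)) / real t else 0) \<in> C
        else good D C t n (z + s) (r - 1) (a(z := Suc (a z))) \<omega>)
     else good D C t n (z + s) r a \<omega>)"
proof -
  define r' where "r' = (if z \<in> D then r - 1 else r)"
  define a' where "a' = (if z \<in> D then a(z := Suc (a z)) else a)"
  have rec: "locD z (s ## \<omega>) (Suc k) D = r \<longleftrightarrow> locD (z + s) \<omega> k D = r'" for k
    using r by (auto simp: locD_Suc_Cons[OF D] r'_def)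
  have n0: "\<not> locD z (s ## \<omega>) 0 D = r" using r by simp
  have ex: "(\<exists>k\<le>Suc n. locD z (s ## \<omega>) k D = r) \<longleftrightarrow> (\<exists>k\<le>n. locD (z + s) \<omega> k D = r')"
  proof
    assume "\<exists>k\<le>Suc n. locD z (s ## \<omega>) k D = r"
    then obtain k where k: "k \<le> Suc n" "locD z (s ## \<omega>) k D = r" by blast
    with n0 obtain k' where "k = Suc k'" by (cases k) auto
    with k rec show "\<exists>k\<le>n. locD (z + s) \<omega> k D = r'" by auto
  next
    assume "\<exists>k\<le>n. locD (z + s) \<omega> k D = r'"
    then obtain k where "k \<le> n" "locD (z + s) \<omega> k D = r'" by blast
    with rec show "\<exists>k\<le>Suc n. locD z (s ## \<omega>) k D = r" by (intro exI[of _ "Suc k"]) auto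
  qed
  have least: "(LEAST k. locD z (s ## \<omega>) k D = r) = Suc (LEAST k. locD (z + s) \<omega> k D = r')"
    if "\<exists>k. locD (z + s) \<omega> k D = r'"
  proof -
    from that obtain k where "locD (z + s) \<omega> k D = r'" by blast
    hence "locD z (s ## \<omega>) (Suc k) D = r" using rec by simp
    hence "(LEAST k. locD z (s ## \<omega>) k D = r) = Suc (LEAST m. locD z (s ## \<omega>) (Suc m) D = r)"
      by (rule Least_Suc) (rule n0)
    also have "(\<lambda>m. locD z (s ## \<omega>) (Suc m) D = r) = (\<lambda>m. locD (z + s) \<omega> m D = r')"
      using rec by auto
    finally show ?thesis .
  qed
  show ?thesis
  proof (cases "z \<in> D \<and> r = 1")
    case True
    then have r'0: "r' = 0" by (simp add: r'_def)
    have ex1: "\<exists>k\<le>Suc n. locD z (s ## \<omega>) k D = r" using ex r'0 by (auto intro: exI[of _ 0])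
    have l0: "(LEAST k. locD (z + s) \<omega> k D = r') = 0" using r'0 by (simp add: Least_eq_0)
    have "(LEAST k. locD z (s ## \<omega>) k D = r) = Suc 0"
      using least[OF exI[of _ 0]] r'0 l0 by simp
    then have "(LEAST k. locD z (s ## \<omega>) k D = r) = 1" by simp
    then have eqf1: "(\<lambda>y. if y \<in> D then (real (a y) + real (loc z (s ## \<omega>) (LEAST k. locD z (s ## \<omega>) k D = r) y)) / real t else 0)
       = (\<lambda>y. if y \<in> D then (real (a y) + (if z = y then 1 else 0)) / real t else 0)"
      by (intro ext) (simp add: loc_Suc_Cons[where k=0, simplified])
    show ?thesis using True ex1 unfolding good_def eqf1 by simp
  next
    case False
    have r'1: "r' \<ge> 1" using False r by (auto simp: r'_def)
    have eqf: "(\<lambda>y. if y \<in> D then (real (a y) + real (loc z (s ## \<omega>) (Suc (LEAST k. locD (z + s) \<omega> k D = r')) y)) / real t else 0)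
          = (\<lambda>y. if y \<in> D then (real (a' y) + real (loc (z + s) \<omega> (LEAST k. locD (z + s) \<omega> k D = r') y)) / real t else 0)"
      by (rule ext) (auto simp: loc_Suc_Cons a'_def)
    have "good D C t (Suc n) z r a (s ## \<omega>) \<longleftrightarrow> good D C t n (z + s) r' a' \<omega>"
    proof (cases "\<exists>k\<le>n. locD (z + s) \<omega> k D = r'")
      case True
      then have L: "(LEAST k. locD z (s ## \<omega>) k D = r) = Suc (LEAST k. locD (z + s) \<omega> k D = r')"
        using least by blast
      show ?thesis unfolding good_def ex L eqf by simp
    next
      case False thus ?thesis unfolding good_def ex by blast
    qed
    then show ?thesis using False by (auto simp: r'_def a'_def)
  qed
qed



lemma space_srw[simp]: "space (srw_steps :: ('d::finite \<Rightarrow> int) stream measure) = UNIV"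
  by (simp add: srw_steps_def space_stream_space)

lemma sets_srw_step:
  assumes "\<And>s. {\<omega>. P s \<omega>} \<in> sets (srw_steps :: ('d::finite \<Rightarrow> int) stream measure)"
  shows "{\<omega>. P (shd \<omega>) (stl \<omega>)} \<in> sets (srw_steps :: ('d::finite \<Rightarrow> int) stream measure)"
proof -
  let ?S = "srw_steps :: ('d::finite \<Rightarrow> int) stream measure"
  have f: "(\<lambda>\<omega>. P s (stl \<omega>)) \<in> measurable ?S (count_space UNIV)" for s
  proof -
    have "{x\<in>space ?S. P s x} \<in> sets ?S" using assms by simp
    moreover have "stl \<in> measurable ?S ?S" unfolding srw_steps_def by (rule measurable_stl)
    ultimately show ?thesis using pred_sets1[where P="P s" and M="?S" and f=stl and N="?S"] by blast
  qed
  have g: "shd \<in> measurable ?S (count_space UNIV)"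
  proof -
    have "shd \<in> measurable ?S (measure_pmf (pmf_of_set unit_steps))"
      unfolding srw_steps_def by (rule measurable_shd)
    moreover have "measurable ?S (measure_pmf (pmf_of_set unit_steps)) = measurable ?S (count_space UNIV)"
      by (rule measurable_cong_sets) auto
    ultimately show ?thesis by simp
  qed
  have "(\<lambda>\<omega>. P (shd \<omega>) (stl \<omega>)) \<in> measurable ?S (count_space UNIV)"
    by (rule measurable_compose_countable[where f="\<lambda>s \<omega>. P s (stl \<omega>)", OF f g])
  then have "{x\<in>space ?S. P (shd x) (stl x)} \<in> sets ?S" by (rule pred_def[THEN iffD1])
  moreover have "{x\<in>space ?S. P (shd x) (stl x)} = {\<omega>. P (shd \<omega>) (stl \<omega>)}" by simp
  ultimately show ?thesis by simp
qed

lemma prob_space_srw: "prob_space (srw_steps :: ('d::finite \<Rightarrow> int) stream measure)"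
  unfolding srw_steps_def by (rule prob_space.prob_space_stream_space) (rule prob_space_measure_pmf)

lemma emeasure_srw_step:
  assumes "\<And>s. {\<omega>. P s \<omega>} \<in> sets (srw_steps :: ('d::finite \<Rightarrow> int) stream measure)"
  shows "emeasure (srw_steps :: ('d::finite \<Rightarrow> int) stream measure) {\<omega>. P (shd \<omega>) (stl \<omega>)} =
     (\<Sum>s\<in>unit_steps. emeasure (srw_steps :: ('d::finite \<Rightarrow> int) stream measure) {\<omega>. P s \<omega>}) / card (unit_steps :: ('d \<Rightarrow> int) set)"
proof -
  let ?S = "srw_steps :: ('d::finite \<Rightarrow> int) stream measure"
  let ?M = "measure_pmf (pmf_of_set (unit_steps :: ('d \<Rightarrow> int) set))"
  let ?A = "{\<omega>. P (shd \<omega>) (stl \<omega>)}"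
  have A: "?A \<in> sets ?S" by (rule sets_srw_step[OF assms])
  have "emeasure ?S ?A = (\<integral>\<^sup>+\<omega>. indicator ?A \<omega> \<partial>?S)"
    using A by simp
  also have "\<dots> = (\<integral>\<^sup>+s. (\<integral>\<^sup>+\<omega>. indicator ?A (s ## \<omega>) \<partial>?S) \<partial>?M)"
    unfolding srw_steps_def
    by (rule prob_space.nn_integral_stream_space[OF prob_space_measure_pmf])
       (use A in \<open>simp add: srw_steps_def\<close>)
  also have "\<dots> = (\<integral>\<^sup>+s. emeasure ?S {\<omega>. P s \<omega>} \<partial>?M)"
  proof (rule nn_integral_cong)
    fix s
    have "(\<lambda>\<omega>. indicator ?A (s ## \<omega>) :: ennreal) = indicator {\<omega>. P s \<omega>}"
      by (auto simp: indicator_def)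
    then show "(\<integral>\<^sup>+\<omega>. indicator ?A (s ## \<omega>) \<partial>?S) = emeasure ?S {\<omega>. P s \<omega>}"
      using assms[of s] by simp
  qed
  also have "\<dots> = (\<Sum>s\<in>unit_steps. emeasure ?S {\<omega>. P s \<omega>}) / card (unit_steps :: ('d \<Rightarrow> int) set)"
    by (rule nn_integral_pmf_of_set[OF unit_steps_ne finite_unit_steps])
  finally show ?thesis .
qed

lemma good_sets:
  assumes "finite D" "r \<ge> 1"
  shows "{\<omega>. good D C t n z r a \<omega>} \<in> sets (srw_steps :: ('d::finite \<Rightarrow> int) stream measure)"
  using assms(2)
proof (induction n arbitrary: z r a)
  case 0
  then have e: "{\<omega>. good D C t 0 z r a \<omega>} = {}" using good_0[of r D C t z a] by blast
  show ?case unfolding e by (rule sets.empty_sets)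
next
  case (Suc n)
  define P where "P = (\<lambda>s \<omega>. (if z \<in> D then
       (if r = 1 then (\<lambda>y. if y \<in> D then (real (a y) + (if z = y then 1 else 0)) / real t else 0) \<in> C
        else good D C t n (z + s) (r - 1) (a(z := Suc (a z))) \<omega>)
     else good D C t n (z + s) r a \<omega>))"
  have eq: "{\<omega>. good D C t (Suc n) z r a \<omega>} = {\<omega>. P (shd \<omega>) (stl \<omega>)}"
  proof (rule set_eqI)
    fix \<omega> :: "('d \<Rightarrow> int) stream"
    have "good D C t (Suc n) z r a \<omega> = good D C t (Suc n) z r a (shd \<omega> ## stl \<omega>)" by simp
    also have "\<dots> = P (shd \<omega>) (stl \<omega>)" unfolding P_def by (rule good_Suc_Cons[OF assms(1) Suc.prems])
    finally show "\<omega> \<in> {\<omega>. good D C t (Suc n) z r a \<omega>} \<longleftrightarrow> \<omega> \<in> {\<omega>. P (shd \<omega>) (stl \<omega>)}" by simp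
  qed
  have U: "UNIV \<in> sets (srw_steps :: ('d::finite \<Rightarrow> int) stream measure)"
    using sets.top[of "srw_steps :: ('d::finite \<Rightarrow> int) stream measure"] by simp
  have "{\<omega>. P s \<omega>} \<in> sets (srw_steps :: ('d::finite \<Rightarrow> int) stream measure)" for s
  proof (cases "z \<in> D")
    case True
    show ?thesis
    proof (cases "r = 1")
      case True
      then show ?thesis unfolding P_def using \<open>z \<in> D\<close> U by (cases "(\<lambda>y. if y \<in> D then (real (a y) + (if z = y then 1 else 0)) / real t else 0) \<in> C") simp_all
    next
      case False
      then have "r - 1 \<ge> 1" using Suc.prems by simp
      then show ?thesis unfolding P_def using \<open>z \<in> D\<close> False Suc.IH by simp
    qed
  next
    case False
    then show ?thesis unfolding P_def using Suc.IH Suc.prems by simp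
  qed
  then show ?case unfolding eq by (rule sets_srw_step)
qed



abbreviation NU :: "'d::finite itself \<Rightarrow> real" where
  "NU _ \<equiv> real (card (unit_steps :: ('d \<Rightarrow> int) set))"

lemma NU_pos: "real (card (unit_steps :: ('d::finite \<Rightarrow> int) set)) > 0"
  using card_unit_steps_pos by simp

fun Wk :: "('d::finite \<Rightarrow> int) set \<Rightarrow> nat \<Rightarrow> ('d \<Rightarrow> int) \<Rightarrow> ('d \<Rightarrow> int) \<Rightarrow> real" where
  "Wk D 0 z w = (if z = w \<and> z \<notin> D then 1 else 0)"
| "Wk D (Suc k) z w = (if z \<in> D then 0 else
     (\<Sum>s\<in>unit_steps. Wk D k (z + s) w) / real (card (unit_steps :: ('d \<Rightarrow> int) set)))"

lemma Wk_nonneg: "Wk D k z w \<ge> 0"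
  by (induction k arbitrary: z) (auto intro!: sum_nonneg divide_nonneg_nonneg)

lemma Wk_inD: "z \<in> D \<Longrightarrow> Wk D k z w = 0"
  by (cases k) auto

lemma sum_unit_steps_neg:
  "(\<Sum>s\<in>unit_steps. g (- s)) = (\<Sum>s\<in>(unit_steps :: ('d::finite \<Rightarrow> int) set). g s)"
proof -
  have "bij_betw uminus (unit_steps :: ('d::finite \<Rightarrow> int) set) unit_steps"
    by (rule bij_betwI[where g=uminus]) (auto simp: unit_steps_neg)
  then show ?thesis by (rule sum.reindex_bij_betw)
qed

lemma Wk_alt:
  fixes z w :: "'d::finite \<Rightarrow> int"
  shows "Wk D (Suc k) z w = (if w \<in> D then 0 else
     (\<Sum>s\<in>unit_steps. Wk D k z (w + s)) / real (card (unit_steps :: ('d::finite \<Rightarrow> int) set)))"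
proof (induction k arbitrary: z w)
  case 0
  have "(\<Sum>s\<in>unit_steps. Wk D 0 (z + s) w) = (\<Sum>s\<in>unit_steps. if z \<notin> D \<and> w \<notin> D \<and> z + s = w then 1 else (0::real))"
    if "z \<notin> D" by (rule sum.cong) (auto simp: that)
  moreover have "(\<Sum>s\<in>unit_steps. Wk D 0 z (w + s)) = (\<Sum>s\<in>unit_steps. if z \<notin> D \<and> w \<notin> D \<and> z = w + s then 1 else (0::real))"
    if "w \<notin> D" by (rule sum.cong) (auto simp: that)
  moreover have "(\<Sum>s\<in>unit_steps. if z \<notin> D \<and> w \<notin> D \<and> z + s = w then 1 else (0::real)) =
      (\<Sum>s\<in>(unit_steps :: ('d \<Rightarrow> int) set). if z \<notin> D \<and> w \<notin> D \<and> z = w + s then 1 else (0::real))"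
  proof -
    have "(\<Sum>s\<in>(unit_steps :: ('d \<Rightarrow> int) set). if z \<notin> D \<and> w \<notin> D \<and> z = w + s then 1 else (0::real))
      = (\<Sum>s\<in>(unit_steps :: ('d \<Rightarrow> int) set). if z \<notin> D \<and> w \<notin> D \<and> z = w + - s then 1 else (0::real))"
      by (rule sum_unit_steps_neg[symmetric])
    also have "\<dots> = (\<Sum>s\<in>unit_steps. if z \<notin> D \<and> w \<notin> D \<and> z + s = w then 1 else (0::real))"
      by (rule sum.cong) (auto simp: algebra_simps)
    finally show ?thesis by simp
  qed
  ultimately have ndnd: "z \<notin> D \<Longrightarrow> w \<notin> D \<Longrightarrow> (\<Sum>s\<in>unit_steps. Wk D 0 (z + s) w) = (\<Sum>s\<in>unit_steps. Wk D 0 z (w + s))"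
    by simp
  show ?case
  proof (cases "z \<in> D")
    case True
    then show ?thesis by (simp add: Wk_inD)
  next
    case zD: False
    show ?thesis
    proof (cases "w \<in> D")
      case True
      have "(\<Sum>s\<in>unit_steps. Wk D 0 (z + s) w) = 0"
        by (rule sum.neutral) (use True in auto)
      then show ?thesis using zD True by simp
    next
      case False
      then show ?thesis using zD ndnd by simp
    qed
  qed
next
  case (Suc k)
  have "(\<Sum>s\<in>unit_steps. Wk D (Suc k) (z + s) w) =
     (\<Sum>s\<in>unit_steps. (if w \<in> D then 0 else
     (\<Sum>s'\<in>unit_steps. Wk D k (z + s) (w + s')) / real (card (unit_steps :: ('d::finite \<Rightarrow> int) set))))"
    using Suc.IH by simp
  also have "\<dots> = (if w \<in> D then 0 else (\<Sum>s'\<in>unit_steps. \<Sum>s\<in>unit_steps. Wk D k (z + s) (w + s')) / real (card (unit_steps :: ('d::finite \<Rightarrow> int) set)))"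
    by (auto simp: sum_divide_distrib[symmetric] intro: sum.swap)
  finally have A: "(\<Sum>s\<in>unit_steps. Wk D (Suc k) (z + s) w) = \<dots>" .
  have B: "(\<Sum>s'\<in>unit_steps. Wk D (Suc k) z (w + s')) = (if z \<in> D then 0 else
       (\<Sum>s'\<in>unit_steps. \<Sum>s\<in>unit_steps. Wk D k (z + s) (w + s')) / real (card (unit_steps :: ('d::finite \<Rightarrow> int) set)))"
    by (simp only: Wk.simps) (auto simp: sum_divide_distrib[symmetric])
  show ?case
    unfolding Wk.simps(2)[of D "Suc k"] A B by simp
qed

lemma Wk_sym: "Wk D k z w = Wk D k w z"
proof (induction k arbitrary: z w)
  case 0 then show ?case by auto
next
  case (Suc k)
  have "(\<Sum>s\<in>unit_steps. Wk D k (z + s) w) = (\<Sum>s\<in>unit_steps. Wk D k w (z + s))"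
    by (rule sum.cong) (auto intro: Suc.IH)
  then show ?case unfolding Wk.simps(2)[of D k z w] Wk_alt[of D k w z] by simp
qed

definition hk :: "('d::finite \<Rightarrow> int) set \<Rightarrow> nat \<Rightarrow> ('d \<Rightarrow> int) \<Rightarrow> ('d \<Rightarrow> int) \<Rightarrow> real" where
  "hk D k z y = (\<Sum>s\<in>unit_steps. Wk D k z (y - s)) / real (card (unit_steps :: ('d \<Rightarrow> int) set))"

lemma hk_nonneg: "hk D k z y \<ge> 0"
  unfolding hk_def by (intro divide_nonneg_nonneg sum_nonneg Wk_nonneg) auto

lemma hk_inD: "z \<in> D \<Longrightarrow> hk D k z y = 0"
  unfolding hk_def by (simp add: Wk_inD)

lemma hk_0:
  fixes z y :: "'d::finite \<Rightarrow> int"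
  shows "hk D 0 z y = (if z \<in> D then 0 else
    (\<Sum>s\<in>unit_steps. if z + s = y then 1 else 0) / real (card (unit_steps :: ('d \<Rightarrow> int) set)))"
proof -
  have "(\<Sum>s\<in>unit_steps. Wk D 0 z (y - s)) = (\<Sum>s\<in>(unit_steps :: ('d \<Rightarrow> int) set). if z \<in> D then 0 else if z + s = y then 1 else 0)"
    by (rule sum.cong) (auto simp: algebra_simps)
  then show ?thesis unfolding hk_def by simp
qed

lemma hk_Suc:
  fixes z y :: "'d::finite \<Rightarrow> int"
  shows "hk D (Suc k) z y = (if z \<in> D then 0 else
    (\<Sum>s\<in>unit_steps. hk D k (z + s) y) / real (card (unit_steps :: ('d \<Rightarrow> int) set)))"
proof (cases "z \<in> D")
  case True then show ?thesis by (simp add: hk_inD)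
next
  case False
  have "(\<Sum>s'\<in>unit_steps. Wk D (Suc k) z (y - s')) =
    (\<Sum>s'\<in>unit_steps. \<Sum>s\<in>unit_steps. Wk D k (z + s) (y - s')) / real (card (unit_steps :: ('d \<Rightarrow> int) set))"
    using False by (simp only: Wk.simps if_False sum_divide_distrib)
  also have "\<dots> = (\<Sum>s\<in>unit_steps. \<Sum>s'\<in>unit_steps. Wk D k (z + s) (y - s')) / real (card (unit_steps :: ('d \<Rightarrow> int) set))"
    by (subst sum.swap) simp
  finally show ?thesis using False unfolding hk_def by (simp add: sum_divide_distrib)
qed

definition HN :: "('d::finite \<Rightarrow> int) set \<Rightarrow> nat \<Rightarrow> ('d \<Rightarrow> int) \<Rightarrow> ('d \<Rightarrow> int) \<Rightarrow> real" where
  "HN D n z y = (\<Sum>k<n. hk D k z y)"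

lemma HN_inD: "z \<in> D \<Longrightarrow> HN D n z y = 0"
  by (simp add: HN_def hk_inD)

lemma HN_nonneg: "HN D n z y \<ge> 0"
  by (simp add: HN_def hk_nonneg sum_nonneg)

lemma HN_Suc:
  fixes z y :: "'d::finite \<Rightarrow> int"
  shows "HN D (Suc n) z y = (if z \<in> D then 0 else
    (\<Sum>s\<in>unit_steps. (if z + s = y then 1 else 0) + HN D n (z + s) y) / real (card (unit_steps :: ('d \<Rightarrow> int) set)))"
proof (cases "z \<in> D")
  case True then show ?thesis by (simp add: HN_inD)
next
  case False
  have "HN D (Suc n) z y = hk D 0 z y + (\<Sum>k<n. hk D (Suc k) z y)"
    unfolding HN_def by (rule sum.lessThan_Suc_shift)
  also have "(\<Sum>k<n. hk D (Suc k) z y) = (\<Sum>k<n. (\<Sum>s\<in>unit_steps. hk D k (z + s) y) / real (card (unit_steps :: ('d \<Rightarrow> int) set)))"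
    using False by (simp add: hk_Suc)
  also have "\<dots> = (\<Sum>s\<in>unit_steps. HN D n (z + s) y) / real (card (unit_steps :: ('d \<Rightarrow> int) set))"
    unfolding HN_def sum_divide_distrib[symmetric] by (subst sum.swap) simp
  finally show ?thesis using False by (simp add: hk_0 sum.distrib add_divide_distrib)
qed

lemma sum_indicator_eq: "finite D \<Longrightarrow> (\<Sum>y\<in>D. if w = y then (1::real) else 0) = (if w \<in> D then 1 else 0)"
  by (simp add: sum.delta)

lemma HN_le:
  fixes D :: "('d::finite \<Rightarrow> int) set"
  shows "finite D \<Longrightarrow> (\<Sum>y\<in>D. HN D n z y) \<le> 1"
proof (induction n arbitrary: z)
  case 0 then show ?case by (simp add: HN_def)
next
  case (Suc n)
  show ?case
  proof (cases "z \<in> D")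
    case True then show ?thesis by (simp add: HN_inD)
  next
    case False
    have "(\<Sum>y\<in>D. HN D (Suc n) z y) = (\<Sum>s\<in>unit_steps. (\<Sum>y\<in>D. (if z + s = y then 1 else 0) + HN D n (z + s) y)) / real (card (unit_steps :: ('d \<Rightarrow> int) set))"
      using False unfolding HN_Suc by (simp add: sum_divide_distrib[symmetric]) (rule disjI2, rule sum.swap)
    also have "\<dots> \<le> (\<Sum>s\<in>(unit_steps :: ('d \<Rightarrow> int) set). 1) / real (card (unit_steps :: ('d \<Rightarrow> int) set))"
    proof (intro divide_right_mono sum_mono)
      fix s :: "'d \<Rightarrow> int"
      show "(\<Sum>y\<in>D. (if z + s = y then 1 else 0) + HN D n (z + s) y) \<le> 1"
      proof (cases "z + s \<in> D")
        case True then show ?thesis using Suc.prems by (simp add: sum.distrib sum_indicator_eq HN_inD)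
      next
        case False
        have "(\<Sum>y\<in>D. HN D n (z + s) y) \<le> 1" by (rule Suc.IH[OF Suc.prems])
        then show ?thesis using Suc.prems False by (simp add: sum.distrib sum_indicator_eq)
      qed
    qed simp
    also have "\<dots> = 1" using card_unit_steps_pos by simp
    finally show ?thesis .
  qed
qed

lemma HN_le1:
  fixes D :: "('d::finite \<Rightarrow> int) set"
  assumes "finite D" "y \<in> D"
  shows "HN D n z y \<le> 1"
proof -
  have "HN D n z y \<le> (\<Sum>y\<in>D. HN D n z y)"
    by (rule member_le_sum) (use assms HN_nonneg in auto)
  also have "\<dots> \<le> 1" by (rule HN_le[OF assms(1)])
  finally show ?thesis .
qed

definition H :: "('d::finite \<Rightarrow> int) set \<Rightarrow> ('d \<Rightarrow> int) \<Rightarrow> ('d \<Rightarrow> int) \<Rightarrow> real" where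
  "H D z y = (\<Sum>k. hk D k z y)"

lemma summable_hk:
  fixes D :: "('d::finite \<Rightarrow> int) set"
  assumes "finite D" "y \<in> D"
  shows "summable (\<lambda>k. hk D k z y)"
  by (rule summableI_nonneg_bounded[where x=1]) (use HN_le1[OF assms] in \<open>auto simp: hk_nonneg HN_def\<close>)

lemma HN_lim:
  fixes D :: "('d::finite \<Rightarrow> int) set"
  assumes "finite D" "y \<in> D"
  shows "(\<lambda>n. HN D n z y) \<longlonglongrightarrow> H D z y"
  unfolding HN_def H_def by (rule summable_LIMSEQ[OF summable_hk[OF assms]])


lemma H_nonneg':
  fixes D :: "('d::finite \<Rightarrow> int) set"
  assumes "finite D" "y \<in> D"
  shows "H D z y \<ge> 0"
  unfolding H_def by (rule suminf_nonneg[OF summable_hk[OF assms]]) (auto simp: hk_nonneg)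

lemma H_inD: "z \<in> D \<Longrightarrow> H D z y = 0"
  by (simp add: H_def hk_inD)

lemma H_sum_le:
  fixes D :: "('d::finite \<Rightarrow> int) set"
  assumes "finite D"
  shows "(\<Sum>y\<in>D. H D z y) \<le> 1"
proof -
  have "(\<lambda>n. \<Sum>y\<in>D. HN D n z y) \<longlonglongrightarrow> (\<Sum>y\<in>D. H D z y)"
    by (rule tendsto_sum) (rule HN_lim[OF assms])
  then show ?thesis by (rule LIMSEQ_le_const2) (use HN_le[OF assms] in auto)
qed

lemma H_rec:
  fixes D :: "('d::finite \<Rightarrow> int) set"
  assumes "finite D" "y \<in> D"
  shows "H D z y = (if z \<in> D then 0 else
    (\<Sum>s\<in>unit_steps. (if z + s = y then 1 else 0) + H D (z + s) y) / real (card (unit_steps :: ('d \<Rightarrow> int) set)))"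
proof (cases "z \<in> D")
  case True then show ?thesis by (simp add: H_inD)
next
  case False
  have "(\<lambda>n. HN D (Suc n) z y) \<longlonglongrightarrow> H D z y"
    using HN_lim[OF assms] by (rule LIMSEQ_Suc)
  moreover have "(\<lambda>n. HN D (Suc n) z y) \<longlonglongrightarrow> 
    (\<Sum>s\<in>unit_steps. (if z + s = y then 1 else 0) + H D (z + s) y) / real (card (unit_steps :: ('d \<Rightarrow> int) set))"
    unfolding HN_Suc using False
    by (simp only: if_False) (intro tendsto_intros tendsto_sum HN_lim[OF assms], use NU_pos in simp)
  ultimately show ?thesis using False by (simp add: LIMSEQ_unique)
qed

definition Q :: "('d::finite \<Rightarrow> int) set \<Rightarrow> ('d \<Rightarrow> int) \<Rightarrow> ('d \<Rightarrow> int) \<Rightarrow> real" where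
  "Q D y y' = (\<Sum>s\<in>unit_steps. (if y + s = y' then 1 else 0) + H D (y + s) y') / real (card (unit_steps :: ('d \<Rightarrow> int) set))"

lemma Q_nonneg:
  fixes D :: "('d::finite \<Rightarrow> int) set"
  assumes "finite D" "y' \<in> D"
  shows "Q D y y' \<ge> 0"
  unfolding Q_def by (intro divide_nonneg_nonneg sum_nonneg add_nonneg_nonneg H_nonneg'[OF assms]) auto

lemma sum_hk_sym:
  fixes y y' :: "'d::finite \<Rightarrow> int"
  shows "(\<Sum>s\<in>unit_steps. hk D k (y + s) y') = (\<Sum>s\<in>unit_steps. hk D k (y' + s) y)"
proof -
  have "(\<Sum>s\<in>unit_steps. \<Sum>s'\<in>unit_steps. Wk D k (y' + s) (y - s')) =
        (\<Sum>s\<in>unit_steps. \<Sum>s'\<in>unit_steps. Wk D k (y - s') (y' + s))"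
    by (simp add: Wk_sym[of D k "y' + _"])
  also have "\<dots> = (\<Sum>s'\<in>unit_steps. \<Sum>s\<in>unit_steps. Wk D k (y - s') (y' + s))"
    by (rule sum.swap)
  also have "\<dots> = (\<Sum>s'\<in>unit_steps. \<Sum>s\<in>unit_steps. Wk D k (y - - s') (y' + - s))"
    by (simp only: sum_unit_steps_neg[of "\<lambda>s'. \<Sum>s\<in>unit_steps. Wk D k (y - s') (y' + s)"]
                   sum_unit_steps_neg[of "\<lambda>s. Wk D k (y - _) (y' + s)"])
  also have "\<dots> = (\<Sum>s'\<in>unit_steps. \<Sum>s\<in>unit_steps. Wk D k (y + s') (y' - s))"
    by (simp add: algebra_simps)
  finally show ?thesis unfolding hk_def by (simp add: sum_divide_distrib[symmetric])
qed

lemma Q_sym: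
  fixes D :: "('d::finite \<Rightarrow> int) set"
  assumes "finite D" "y \<in> D" "y' \<in> D"
  shows "Q D y y' = Q D y' y"
proof -
  have A: "(\<Sum>s\<in>unit_steps. if y + s = y' then 1 else (0::real)) = (\<Sum>s\<in>unit_steps. if y' + s = y then 1 else 0)"
  proof -
    have "(\<Sum>s\<in>unit_steps. if y' + s = y then 1 else (0::real)) = (\<Sum>s\<in>unit_steps. if y' + - s = y then 1 else (0::real))"
      by (rule sum_unit_steps_neg[symmetric])
    also have "\<dots> = (\<Sum>s\<in>unit_steps. if y + s = y' then 1 else (0::real))"
      by (rule sum.cong) (auto simp: algebra_simps)
    finally show ?thesis by simp
  qed
  have K: "(\<Sum>s\<in>unit_steps. H D (y + s) y') = (\<Sum>s\<in>unit_steps. H D (y' + s) y)"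
  proof -
    have "(\<Sum>s\<in>unit_steps. H D (y + s) y') = (\<Sum>k. \<Sum>s\<in>unit_steps. hk D k (y + s) y')"
      unfolding H_def by (rule suminf_sum[symmetric]) (rule summable_hk[OF assms(1,3)])
    also have "\<dots> = (\<Sum>k. \<Sum>s\<in>unit_steps. hk D k (y' + s) y)"
      by (simp only: sum_hk_sym)
    also have "\<dots> = (\<Sum>s\<in>unit_steps. H D (y' + s) y)"
      unfolding H_def by (rule suminf_sum) (rule summable_hk[OF assms(1,2)])
    finally show ?thesis .
  qed
  show ?thesis unfolding Q_def sum.distrib A K ..
qed

lemma Q_rowsum:
  fixes D :: "('d::finite \<Rightarrow> int) set"
  assumes "finite D"
  shows "(\<Sum>y'\<in>D. Q D y y') \<le> 1"
proof -
  have "(\<Sum>y'\<in>D. Q D y y') = (\<Sum>s\<in>unit_steps. \<Sum>y'\<in>D. (if y + s = y' then 1 else 0) + H D (y + s) y') / real (card (unit_steps :: ('d \<Rightarrow> int) set))"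
    unfolding Q_def by (simp add: sum_divide_distrib[symmetric]) (rule disjI2, rule sum.swap)
  also have "\<dots> \<le> (\<Sum>s\<in>(unit_steps :: ('d \<Rightarrow> int) set). 1) / real (card (unit_steps :: ('d \<Rightarrow> int) set))"
  proof (intro divide_right_mono sum_mono)
    fix s :: "'d \<Rightarrow> int"
    show "(\<Sum>y'\<in>D. (if y + s = y' then 1 else 0) + H D (y + s) y') \<le> 1"
    proof (cases "y + s \<in> D")
      case True then show ?thesis using assms by (simp add: sum.distrib sum_indicator_eq H_inD)
    next
      case False
      have "(\<Sum>y'\<in>D. H D (y + s) y') \<le> 1" by (rule H_sum_le[OF assms])
      then show ?thesis using assms False by (simp add: sum.distrib sum_indicator_eq)
    qed
  qed simp
  also have "\<dots> = 1" using card_unit_steps_pos by simp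
  finally show ?thesis .
qed

definition uf :: "('d::finite \<Rightarrow> int) set \<Rightarrow> (('d \<Rightarrow> int) \<Rightarrow> real) \<Rightarrow> ('d \<Rightarrow> int) \<Rightarrow> real" where
  "uf D f z = (if z \<in> D then f z else (\<Sum>y\<in>D. f y * H D z y))"

lemma uf_step:
  fixes D :: "('d::finite \<Rightarrow> int) set"
  assumes "finite D"
  shows "(\<Sum>y\<in>D. f y * ((if w = y then 1 else 0) + H D w y)) = uf D f w"
proof (cases "w \<in> D")
  case True
  have "(\<Sum>y\<in>D. f y * ((if w = y then 1 else 0) + H D w y)) = (\<Sum>y\<in>D. if w = y then f y else 0)"
    by (intro sum.cong) (auto simp: H_inD True)
  then show ?thesis using assms True by (simp add: uf_def sum.delta)
next
  case False
  then have "(\<Sum>y\<in>D. f y * ((if w = y then 1 else 0) + H D w y)) = (\<Sum>y\<in>D. f y * H D w y)"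
    by (intro sum.cong) auto
  then show ?thesis using False by (simp add: uf_def)
qed

lemma uf_harm:
  fixes D :: "('d::finite \<Rightarrow> int) set"
  assumes "finite D" "z \<notin> D"
  shows "(\<Sum>s\<in>unit_steps. uf D f (z + s)) / real (card (unit_steps :: ('d \<Rightarrow> int) set)) = uf D f z"
proof -
  have "uf D f z = (\<Sum>y\<in>D. f y * ((\<Sum>s\<in>unit_steps. (if z + s = y then 1 else 0) + H D (z + s) y) / real (card (unit_steps :: ('d \<Rightarrow> int) set))))"
    using assms by (simp add: uf_def) (intro sum.cong refl, subst H_rec[OF assms(1)], auto)
  also have "\<dots> = (\<Sum>s\<in>unit_steps. \<Sum>y\<in>D. f y * ((if z + s = y then 1 else 0) + H D (z + s) y)) / real (card (unit_steps :: ('d \<Rightarrow> int) set))"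
    by (simp add: sum_divide_distrib[symmetric] sum_distrib_left) (rule disjI2, rule sum.swap)
  also have "\<dots> = (\<Sum>s\<in>unit_steps. uf D f (z + s)) / real (card (unit_steps :: ('d \<Rightarrow> int) set))"
    by (simp add: uf_step[OF assms(1)])
  finally show ?thesis ..
qed

lemma uf_Q:
  fixes D :: "('d::finite \<Rightarrow> int) set"
  assumes "finite D"
  shows "(\<Sum>s\<in>unit_steps. uf D f (y + s)) / real (card (unit_steps :: ('d \<Rightarrow> int) set)) = (\<Sum>y'\<in>D. Q D y y' * f y')"
proof -
  have "(\<Sum>y'\<in>D. Q D y y' * f y') = (\<Sum>s\<in>unit_steps. \<Sum>y'\<in>D. f y' * ((if y + s = y' then 1 else 0) + H D (y + s) y')) / real (card (unit_steps :: ('d \<Rightarrow> int) set))"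
    unfolding Q_def by (simp add: sum_divide_distrib[symmetric] sum_distrib_left mult.commute) (rule disjI2, rule sum.swap)
  also have "\<dots> = (\<Sum>s\<in>unit_steps. uf D f (y + s)) / real (card (unit_steps :: ('d \<Rightarrow> int) set))"
    by (simp add: uf_step[OF assms(1)])
  finally show ?thesis ..
qed

lemma uf_nonneg:
  fixes D :: "('d::finite \<Rightarrow> int) set"
  assumes "finite D" "\<And>y. y \<in> D \<Longrightarrow> f y \<ge> 0"
  shows "uf D f z \<ge> 0"
  unfolding uf_def using assms H_nonneg'[OF assms(1)] by (auto intro!: sum_nonneg)

lemma uf_pos:
  fixes D :: "('d::finite \<Rightarrow> int) set"
  assumes "finite D" "\<And>y. y \<in> D \<Longrightarrow> f y > 0" "z \<in> closure_nb D"
  shows "uf D f z > 0"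
proof (cases "z \<in> D")
  case True then show ?thesis using assms by (simp add: uf_def)
next
  case False
  then obtain y s where y: "y \<in> D" "s \<in> unit_steps" "z = y + s"
    using assms(3) unfolding closure_nb_eq by auto
  have ms: "- s \<in> unit_steps" using y by (simp add: unit_steps_neg)
  have c: "(1::real) \<le> (\<Sum>s'\<in>unit_steps. if z + s' = y then 1 else 0)"
  proof -
    have "(if z + - s = y then 1 else (0::real)) \<le> (\<Sum>s'\<in>unit_steps. if z + s' = y then 1 else 0)"
      by (rule member_le_sum[OF ms]) (simp_all add: finite_unit_steps)
    then show ?thesis using y by simp
  qed
  have h0: "hk D 0 z y \<ge> 1 / real (card (unit_steps :: ('d \<Rightarrow> int) set))"
    unfolding hk_0 using False c NU_pos by (simp add: divide_right_mono)
  have "hk D 0 z y \<le> H D z y"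
    unfolding H_def using summable_hk[OF assms(1) y(1)]
    by (rule sum_le_suminf[where I="{0}", simplified]) (auto simp: hk_nonneg)
  with h0 NU_pos have Hpos: "H D z y > 0"
    by (smt (verit) divide_pos_pos)
  have "f y * H D z y \<le> (\<Sum>y'\<in>D. f y' * H D z y')"
    by (rule member_le_sum[OF y(1)]) (use assms(1,2) H_nonneg'[OF assms(1)] in \<open>auto intro!: mult_nonneg_nonneg simp: less_imp_le\<close>)
  moreover have "f y * H D z y > 0" using assms(2)[OF y(1)] Hpos by simp
  ultimately show ?thesis using False by (simp add: uf_def)
qed



lemma step_bound:
  fixes P :: "('d::finite \<Rightarrow> int) \<Rightarrow> ('d \<Rightarrow> int) stream \<Rightarrow> bool"
  assumes meas: "\<And>s. {\<omega>. P s \<omega>} \<in> sets (srw_steps :: ('d::finite \<Rightarrow> int) stream measure)"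
    and le: "\<And>s. s \<in> unit_steps \<Longrightarrow> emeasure (srw_steps :: ('d::finite \<Rightarrow> int) stream measure) {\<omega>. P s \<omega>} \<le> ennreal (g s)"
    and g: "\<And>s. s \<in> unit_steps \<Longrightarrow> g s \<ge> 0"
  shows "emeasure (srw_steps :: ('d::finite \<Rightarrow> int) stream measure) {\<omega>. P (shd \<omega>) (stl \<omega>)}
     \<le> ennreal ((\<Sum>s\<in>unit_steps. g s) / real (card (unit_steps :: ('d \<Rightarrow> int) set)))"
proof -
  have "emeasure (srw_steps :: ('d::finite \<Rightarrow> int) stream measure) {\<omega>. P (shd \<omega>) (stl \<omega>)} =
     (\<Sum>s\<in>unit_steps. emeasure (srw_steps :: ('d::finite \<Rightarrow> int) stream measure) {\<omega>. P s \<omega>}) / of_nat (card (unit_steps :: ('d \<Rightarrow> int) set))"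
    by (rule emeasure_srw_step[OF meas])
  also have "\<dots> \<le> (\<Sum>s\<in>unit_steps. ennreal (g s)) / of_nat (card (unit_steps :: ('d \<Rightarrow> int) set))"
    by (intro divide_right_mono_ennreal sum_mono le)
  also have "\<dots> = ennreal (\<Sum>s\<in>unit_steps. g s) / ennreal (real (card (unit_steps :: ('d \<Rightarrow> int) set)))"
    using g by (simp add: ennreal_of_nat_eq_real_of_nat)
  also have "\<dots> = ennreal ((\<Sum>s\<in>unit_steps. g s) / real (card (unit_steps :: ('d \<Rightarrow> int) set)))"
    by (rule divide_ennreal) (use g NU_pos in \<open>auto intro: sum_nonneg\<close>)
  finally show ?thesis .
qed

lemma sum_upd_nat:
  assumes "finite D" "z \<in> D"
  shows "(\<Sum>y\<in>D. (a(z := Suc (a z))) y) = (\<Sum>y\<in>D. a y) + 1"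
proof -
  have "(\<Sum>y\<in>D. (a(z := Suc (a z))) y) = (\<Sum>y\<in>D. a y + (if y = z then 1 else 0))"
    by (rule sum.cong) auto
  also have "\<dots> = (\<Sum>y\<in>D. a y) + 1" using assms by (simp add: sum.distrib)
  finally show ?thesis .
qed

lemma sum_upd_real:
  assumes "finite D" "z \<in> D"
  shows "(\<Sum>y\<in>D. real ((a(z := Suc (a z))) y) * V y) = (\<Sum>y\<in>D. real (a y) * V y) + V z"
proof -
  have "(\<Sum>y\<in>D. real ((a(z := Suc (a z))) y) * V y) = (\<Sum>y\<in>D. real (a y) * V y + (if y = z then V z else 0))"
    by (rule sum.cong) (auto simp: algebra_simps)
  also have "\<dots> = (\<Sum>y\<in>D. real (a y) * V y) + V z" using assms by (simp add: sum.distrib)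
  finally show ?thesis .
qed

lemma prob_bound:
  fixes D :: "('d::finite \<Rightarrow> int) set" and C :: "(('d \<Rightarrow> int) \<Rightarrow> real) set"
    and t :: nat and f :: "('d \<Rightarrow> int) \<Rightarrow> real" and m :: real
  assumes D: "finite D" "D \<noteq> {}" and t: "t \<ge> 1"
    and fpos: "\<And>y. y \<in> D \<Longrightarrow> f y > 0"
    and mC: "\<And>l. l \<in> C \<Longrightarrow> (\<forall>y. l y \<ge> 0) \<Longrightarrow> (\<Sum>y\<in>D. l y) = 1 \<Longrightarrow>
        m \<le> (\<Sum>y\<in>D. l y * ln (f y / (\<Sum>y'\<in>D. Q D y y' * f y')))"
  shows "\<exists>x\<in>closure_nb D. measure srw_steps {\<omega>. tau_fin x \<omega> D t \<and> (\<lambda>y. locTD x \<omega> D t y / real t) \<in> C}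
            \<le> exp (- real t * m)"
proof -
  let ?S = "srw_steps :: ('d::finite \<Rightarrow> int) stream measure"
  let ?N = "real (card (unit_steps :: ('d \<Rightarrow> int) set))"
  define u where "u = uf D f"
  define Pu where "Pu = (\<lambda>y. (\<Sum>s\<in>unit_steps. u (y + s)) / ?N)"
  define V where "V = (\<lambda>y. ln (u y / Pu y))"
  define umin where "umin = Min (u ` closure_nb D)"
  have finc: "finite (closure_nb D)" by (rule finite_closure_nb[OF D(1)])
  have nec: "closure_nb D \<noteq> {}" using D(2) by (auto simp: closure_nb_def)
  have "umin \<in> u ` closure_nb D" unfolding umin_def by (rule Min_in) (use finc nec in auto)
  then obtain x0 where x0: "x0 \<in> closure_nb D" "u x0 = umin" by auto
  have upos: "z \<in> closure_nb D \<Longrightarrow> u z > 0" for z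
    unfolding u_def by (rule uf_pos[OF D(1) fpos])
  have umin_pos: "umin > 0" using x0 upos by auto
  have umin_le: "z \<in> closure_nb D \<Longrightarrow> umin \<le> u z" for z
    unfolding umin_def using finc by auto
  have unn: "u z \<ge> 0" for z unfolding u_def by (rule uf_nonneg[OF D(1)]) (use fpos in \<open>auto intro: less_imp_le\<close>)
  have nbr: "z \<in> D \<Longrightarrow> s \<in> unit_steps \<Longrightarrow> z + s \<in> closure_nb D" for z s
    unfolding closure_nb_eq by auto
  have Pu_ge: "z \<in> D \<Longrightarrow> Pu z \<ge> umin" for z
  proof -
    assume z: "z \<in> D"
    have "(\<Sum>s\<in>(unit_steps :: ('d \<Rightarrow> int) set). umin) \<le> (\<Sum>s\<in>unit_steps. u (z + s))"
      by (rule sum_mono) (rule umin_le[OF nbr[OF z]])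
    then have "?N * umin \<le> (\<Sum>s\<in>unit_steps. u (z + s))" by simp
    moreover have "?N > 0" by (rule NU_pos)
    ultimately show ?thesis unfolding Pu_def by (simp add: pos_le_divide_eq mult.commute)
  qed
  have Pu_pos: "z \<in> D \<Longrightarrow> Pu z > 0" for z using Pu_ge umin_pos by fastforce
  have uD: "z \<in> D \<Longrightarrow> u z = f z" for z unfolding u_def uf_def by simp
  have PuQ: "z \<in> D \<Longrightarrow> Pu z = (\<Sum>y'\<in>D. Q D z y' * f y')" for z
    unfolding Pu_def u_def by (rule uf_Q[OF D(1)])
  have harm: "z \<notin> D \<Longrightarrow> Pu z = u z" for z
    unfolding Pu_def u_def by (rule uf_harm[OF D(1)])
  have expV: "z \<in> D \<Longrightarrow> exp (V z) * Pu z = u z" for z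
  proof -
    assume z: "z \<in> D"
    then have "Pu z > 0" "u z > 0" using Pu_pos upos[of z] by (auto simp: closure_nb_def)
    then show ?thesis unfolding V_def by simp
  qed
  define Psi where "Psi = (\<lambda>z (a :: ('d \<Rightarrow> int) \<Rightarrow> nat). u z * exp ((\<Sum>y\<in>D. real (a y) * V y) - real t * m) / umin)"
  have Psi_nn: "Psi z a \<ge> 0" for z a unfolding Psi_def using unn umin_pos by simp
  have Psi_shift: "(\<Sum>s\<in>unit_steps. Psi (z + s) a) / ?N = Pu z * exp ((\<Sum>y\<in>D. real (a y) * V y) - real t * m) / umin" for z a
    unfolding Psi_def Pu_def by (simp add: sum_divide_distrib[symmetric] sum_distrib_right[symmetric])
  have main: "r \<ge> 1 \<Longrightarrow> (\<Sum>y\<in>D. a y) + r = t \<Longrightarrow> emeasure ?S {\<omega>. good D C t n z r a \<omega>} \<le> ennreal (Psi z a)" for n z r a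
  proof (induction n arbitrary: z r a)
    case 0
    then have e: "{\<omega>. good D C t 0 z r a \<omega>} = {}" using good_0[of r D C t z a] by blast
    show ?case unfolding e by simp
  next
    case (Suc n)
    define P where "P = (\<lambda>s \<omega>. (if z \<in> D then
       (if r = 1 then (\<lambda>y. if y \<in> D then (real (a y) + (if z = y then 1 else 0)) / real t else 0) \<in> C
        else good D C t n (z + s) (r - 1) (a(z := Suc (a z))) \<omega>)
     else good D C t n (z + s) r a \<omega>))"
    have eq: "{\<omega>. good D C t (Suc n) z r a \<omega>} = {\<omega>. P (shd \<omega>) (stl \<omega>)}"
    proof (rule set_eqI)
      fix \<omega> :: "('d \<Rightarrow> int) stream"
      have "good D C t (Suc n) z r a \<omega> = good D C t (Suc n) z r a (shd \<omega> ## stl \<omega>)" by simp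
      also have "\<dots> = P (shd \<omega>) (stl \<omega>)" unfolding P_def by (rule good_Suc_Cons[OF D(1) Suc.prems(1)])
      finally show "\<omega> \<in> {\<omega>. good D C t (Suc n) z r a \<omega>} \<longleftrightarrow> \<omega> \<in> {\<omega>. P (shd \<omega>) (stl \<omega>)}" by simp
    qed
    have U: "UNIV \<in> sets ?S" using sets.top[of ?S] by simp
    have Pmeas: "{\<omega>. P s \<omega>} \<in> sets ?S" for s
    proof (cases "z \<in> D")
      case True
      show ?thesis
      proof (cases "r = 1")
        case True
        then show ?thesis unfolding P_def using \<open>z \<in> D\<close> U by (cases "(\<lambda>y. if y \<in> D then (real (a y) + (if z = y then 1 else 0)) / real t else 0) \<in> C") simp_all
      next
        case False
        then have "r - 1 \<ge> 1" using Suc.prems by simp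
        then show ?thesis unfolding P_def using \<open>z \<in> D\<close> False good_sets[OF D(1)] by simp
      qed
    next
      case False
      then show ?thesis unfolding P_def using good_sets[OF D(1) Suc.prems(1)] by simp
    qed
    show ?case
    proof (cases "z \<in> D")
      case zD: False
      have "emeasure ?S {\<omega>. P (shd \<omega>) (stl \<omega>)} \<le> ennreal ((\<Sum>s\<in>unit_steps. Psi (z + s) a) / ?N)"
      proof (rule step_bound[OF Pmeas _ Psi_nn])
        fix s :: "'d \<Rightarrow> int"
        have "{\<omega>. P s \<omega>} = {\<omega>. good D C t n (z + s) r a \<omega>}" by (simp add: P_def zD)
        moreover have "emeasure ?S {\<omega>. good D C t n (z + s) r a \<omega>} \<le> ennreal (Psi (z + s) a)"
          by (rule Suc.IH[OF Suc.prems])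
        ultimately show "emeasure ?S {\<omega>. P s \<omega>} \<le> ennreal (Psi (z + s) a)" by simp
      qed
      also have "(\<Sum>s\<in>unit_steps. Psi (z + s) a) / ?N = Psi z a"
        using Psi_shift[of z a] harm[OF zD] by (simp add: Psi_def)
      finally show ?thesis unfolding eq .
    next
      case zD: True
      show ?thesis
      proof (cases "r = 1")
        case r1: True
        let ?l = "(\<lambda>y. if y \<in> D then (real (a y) + (if z = y then 1 else 0)) / real t else 0)"
        show ?thesis
        proof (cases "?l \<in> C")
          case False
          then have "{\<omega>. P (shd \<omega>) (stl \<omega>)} = {}" unfolding P_def using zD r1 by simp
          then show ?thesis unfolding eq by simp
        next
          case True
          have sa: "real (\<Sum>y\<in>D. a y) + 1 = real t" using Suc.prems(2) r1
            by (metis of_nat_1 of_nat_add)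
          have tpos: "real t > 0" using t by simp
          have lsum: "(\<Sum>y\<in>D. ?l y) = 1"
          proof -
            have "(\<Sum>y\<in>D. ?l y) = (\<Sum>y\<in>D. (real (a y) + (if z = y then 1 else 0))) / real t"
              by (simp add: sum_divide_distrib)
            also have "\<dots> = (real (\<Sum>y\<in>D. a y) + 1) / real t"
              using zD D(1) by (simp add: sum.distrib)
            finally show ?thesis using sa tpos by simp
          qed
          have lnn: "\<forall>y. ?l y \<ge> 0" by simp
          have Veq: "V y = ln (f y / (\<Sum>y'\<in>D. Q D y y' * f y'))" if "y \<in> D" for y
            unfolding V_def using that uD PuQ by simp
          have "m \<le> (\<Sum>y\<in>D. ?l y * ln (f y / (\<Sum>y'\<in>D. Q D y y' * f y')))"
            by (rule mC[OF True lnn lsum])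
          also have "\<dots> = (\<Sum>y\<in>D. ?l y * V y)"
            by (rule sum.cong) (auto simp: Veq)
          also have "\<dots> = (\<Sum>y\<in>D. real (a y) * V y + (if z = y then V y else 0)) / real t"
            by (simp add: sum_divide_distrib algebra_simps) (rule sum.cong, auto)
          also have "\<dots> = ((\<Sum>y\<in>D. real (a y) * V y) + V z) / real t"
            using zD D(1) by (simp add: sum.distrib)
          finally have "real t * m \<le> (\<Sum>y\<in>D. real (a y) * V y) + V z"
            using tpos by (simp add: field_simps)
          then have "exp (- V z) \<le> exp ((\<Sum>y\<in>D. real (a y) * V y) - real t * m)" by simp
          then have "u z * exp (- V z) \<le> u z * exp ((\<Sum>y\<in>D. real (a y) * V y) - real t * m)"
            using unn by (simp add: mult_left_mono)
          moreover have "u z * exp (- V z) = Pu z"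
            using expV[OF zD] by (simp add: exp_minus field_simps)
          ultimately have "umin \<le> u z * exp ((\<Sum>y\<in>D. real (a y) * V y) - real t * m)"
            using Pu_ge[OF zD] by simp
          then have "1 \<le> Psi z a" unfolding Psi_def using umin_pos by simp
          moreover have "emeasure ?S {\<omega>. P (shd \<omega>) (stl \<omega>)} \<le> 1"
            using prob_space.emeasure_le_1[OF prob_space_srw] by blast
          ultimately show ?thesis unfolding eq
            by (metis ennreal_1 ennreal_leI order.trans)
        qed
      next
        case r1: False
        have r': "r - 1 \<ge> 1" using Suc.prems(1) r1 by simp
        have inv: "(\<Sum>y\<in>D. (a(z := Suc (a z))) y) + (r - 1) = t"
          using Suc.prems sum_upd_nat[OF D(1) zD, of a] r1 by simp
        have "emeasure ?S {\<omega>. P (shd \<omega>) (stl \<omega>)} \<le> ennreal ((\<Sum>s\<in>unit_steps. Psi (z + s) (a(z := Suc (a z)))) / ?N)"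
        proof (rule step_bound[OF Pmeas _ Psi_nn])
          fix s :: "'d \<Rightarrow> int"
          have "{\<omega>. P s \<omega>} = {\<omega>. good D C t n (z + s) (r - 1) (a(z := Suc (a z))) \<omega>}" using r1 by (auto simp: P_def zD)
          moreover have "emeasure ?S {\<omega>. good D C t n (z + s) (r - 1) (a(z := Suc (a z))) \<omega>} \<le> ennreal (Psi (z + s) (a(z := Suc (a z))))"
            by (rule Suc.IH[OF r' inv])
          ultimately show "emeasure ?S {\<omega>. P s \<omega>} \<le> ennreal (Psi (z + s) (a(z := Suc (a z))))" by simp
        qed
        also have "(\<Sum>s\<in>unit_steps. Psi (z + s) (a(z := Suc (a z)))) / ?N = Psi z a"
        proof -
          have "(\<Sum>s\<in>unit_steps. Psi (z + s) (a(z := Suc (a z)))) / ?N =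
              Pu z * exp ((\<Sum>y\<in>D. real (a y) * V y) + V z - real t * m) / umin"
            using Psi_shift[of z "a(z := Suc (a z))"] sum_upd_real[OF D(1) zD, of a V] by simp
          also have "\<dots> = (exp (V z) * Pu z) * exp ((\<Sum>y\<in>D. real (a y) * V y) - real t * m) / umin"
            by (simp add: exp_add exp_diff)
          also have "\<dots> = Psi z a" unfolding expV[OF zD] Psi_def ..
          finally show ?thesis .
        qed
        finally show ?thesis unfolding eq .
      qed
    qed
  qed
  let ?E = "{\<omega>. tau_fin x0 \<omega> D t \<and> (\<lambda>y. locTD x0 \<omega> D t y / real t) \<in> C}"
  have Eeq: "?E = (\<Union>n. {\<omega>. good D C t n x0 t (\<lambda>_. 0) \<omega>})"
  proof (rule set_eqI)
    fix \<omega> :: "('d \<Rightarrow> int) stream"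
    have L: "(\<lambda>k. 1 \<le> k \<and> locD x0 \<omega> k D = t) = (\<lambda>k. locD x0 \<omega> k D = t)"
      using t by (auto intro!: ext) (metis One_nat_def less_one locD_0 not_less)
    have tf: "tau_fin x0 \<omega> D t \<longleftrightarrow> (\<exists>k. locD x0 \<omega> k D = t)"
      unfolding tau_fin_def using L by metis
    have F: "(\<lambda>y. locTD x0 \<omega> D t y / real t) =
       (\<lambda>y. if y \<in> D then (real ((\<lambda>_. 0::nat) y) + real (loc x0 \<omega> (LEAST k. locD x0 \<omega> k D = t) y)) / real t else 0)"
      unfolding locTD_def tau_def L by auto
    show "\<omega> \<in> ?E \<longleftrightarrow> \<omega> \<in> (\<Union>n. {\<omega>. good D C t n x0 t (\<lambda>_. 0) \<omega>})"
    proof -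
      have "\<omega> \<in> ?E \<longleftrightarrow> (\<exists>k. locD x0 \<omega> k D = t) \<and>
        (\<lambda>y. if y \<in> D then (real ((\<lambda>_. 0::nat) y) + real (loc x0 \<omega> (LEAST k. locD x0 \<omega> k D = t) y)) / real t else 0) \<in> C"
        using tf F by simp
      also have "\<dots> \<longleftrightarrow> (\<exists>n. good D C t n x0 t (\<lambda>_. 0) \<omega>)"
        unfolding good_def by blast
      finally show ?thesis by simp
    qed
  qed
  have meas: "range (\<lambda>n. {\<omega>. good D C t n x0 t (\<lambda>_. 0) \<omega>}) \<subseteq> sets ?S"
    using good_sets[OF D(1) t] by auto
  have inc: "incseq (\<lambda>n. {\<omega>. good D C t n x0 t (\<lambda>_. 0) \<omega>})"
    by (rule incseq_SucI) (auto simp: good_def intro: le_SucI)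
  have Psi0: "Psi x0 (\<lambda>_. 0) = exp (- real t * m)"
    unfolding Psi_def x0(2) using umin_pos by simp
  have "emeasure ?S ?E = (SUP n. emeasure ?S {\<omega>. good D C t n x0 t (\<lambda>_. 0) \<omega>})"
    unfolding Eeq by (rule SUP_emeasure_incseq[OF meas inc, symmetric])
  also have "\<dots> \<le> ennreal (exp (- real t * m))"
  proof (rule SUP_least)
    fix n
    have "emeasure ?S {\<omega>. good D C t n x0 t (\<lambda>_. 0) \<omega>} \<le> ennreal (Psi x0 (\<lambda>_. 0))"
      by (rule main) (use t in simp_all)
    then show "emeasure ?S {\<omega>. good D C t n x0 t (\<lambda>_. 0) \<omega>} \<le> ennreal (exp (- real t * m))"
      unfolding Psi0 .
  qed
  finally have "emeasure ?S ?E \<le> ennreal (exp (- real t * m))" .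
  then have "measure ?S ?E \<le> exp (- real t * m)"
    unfolding measure_def by (simp add: enn2real_leI)
  then show ?thesis using x0(1) by blast
qed



lemma finite_subseq:
  fixes X :: "nat \<Rightarrow> 'a \<Rightarrow> real"
  assumes "finite S" "\<And>n y. y \<in> S \<Longrightarrow> \<bar>X n y\<bar> \<le> B"
  shows "\<exists>r. strict_mono r \<and> (\<forall>y\<in>S. convergent (\<lambda>n. X (r n) y))"
  using assms
proof (induction S rule: finite_induct)
  case empty
  show ?case by (rule exI[of _ id]) (simp add: strict_mono_def)
next
  case (insert y S)
  from insert obtain r where r: "strict_mono r" "\<forall>y\<in>S. convergent (\<lambda>n. X (r n) y)" by auto
  obtain r' where r': "strict_mono r'" "monoseq (\<lambda>n. X (r (r' n)) y)"
    using seq_monosub[of "\<lambda>n. X (r n) y"] by auto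
  have "Bseq (\<lambda>n. X (r (r' n)) y)"
    by (rule BseqI'[where K=B]) (use insert.prems in simp)
  then have c: "convergent (\<lambda>n. X (r (r' n)) y)" using r'(2) by (rule Bseq_monoseq_convergent)
  have "convergent (\<lambda>n. X (r (r' n)) y')" if "y' \<in> S" for y'
    using convergent_subseq_convergent[OF r(2)[rule_format, OF that] r'(1)] by (simp add: o_def)
  moreover have "strict_mono (\<lambda>n. r (r' n))" using strict_mono_o[OF r(1) r'(1)] by (simp add: o_def)
  ultimately show ?case using c
    by (intro exI[of _ "\<lambda>n. r (r' n)"]) auto
qed

lemma exists_max:
  fixes D :: "'a set" and C :: "('a \<Rightarrow> real) set" and F :: "('a \<Rightarrow> real) \<Rightarrow> real"
  assumes D: "finite D"
    and CC: "CC = {h\<in>C. (\<forall>y. h y \<ge> 0) \<and> (\<Sum>y\<in>D. h y) = 1}"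
    and ne: "CC \<noteq> {}" and cl: "l1_closed C D"
    and Fcont: "\<And>X g. (\<forall>y\<in>D. (\<lambda>n. X n y) \<longlonglongrightarrow> g y) \<Longrightarrow> (\<lambda>n. F (X n)) \<longlonglongrightarrow> F g"
    and Fbdd: "\<And>h. h \<in> CC \<Longrightarrow> F h \<le> B"
  shows "\<exists>g\<in>CC. \<forall>h\<in>CC. F h \<le> F g"
proof -
  define \<sigma> where "\<sigma> = Sup (F ` CC)"
  have bdd: "bdd_above (F ` CC)" using Fbdd by (intro bdd_aboveI[where M=B]) auto
  have up: "h \<in> CC \<Longrightarrow> F h \<le> \<sigma>" for h unfolding \<sigma>_def using bdd by (auto intro: cSup_upper)
  have "\<exists>h\<in>CC. \<sigma> - inverse (real (Suc n)) < F h" for n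
  proof -
    have "\<sigma> - inverse (real (Suc n)) < \<sigma>" by simp
    then show ?thesis unfolding \<sigma>_def using less_cSup_iff[of "F ` CC"] ne bdd by auto
  qed
  then obtain X where X: "\<And>n. X n \<in> CC" "\<And>n. \<sigma> - inverse (real (Suc n)) < F (X n)"
    by metis
  have Xb: "\<bar>X n y\<bar> \<le> 1" if "y \<in> D" for n y
  proof -
    have nn: "\<forall>y. X n y \<ge> 0" and s1: "(\<Sum>y\<in>D. X n y) = 1" using X(1)[of n] unfolding CC by blast+
    have "X n y \<le> (\<Sum>y\<in>D. X n y)" by (rule member_le_sum[OF that]) (use nn D in auto)
    then show ?thesis using nn s1 by auto
  qed
  obtain r where r: "strict_mono r" "\<forall>y\<in>D. convergent (\<lambda>n. X (r n) y)"
    using finite_subseq[of D X 1] D Xb by blast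
  define g where "g = (\<lambda>y. if y \<in> D then lim (\<lambda>n. X (r n) y) else 0)"
  have lim: "\<forall>y\<in>D. (\<lambda>n. X (r n) y) \<longlonglongrightarrow> g y"
    using r(2) unfolding g_def by (auto simp: convergent_LIMSEQ_iff)
  have gC: "g \<in> C"
  proof -
    have "(\<lambda>n. \<Sum>y\<in>D. \<bar>X (r n) y - g y\<bar>) \<longlonglongrightarrow> (\<Sum>y\<in>D. \<bar>g y - g y\<bar>)"
      by (intro tendsto_sum tendsto_rabs tendsto_diff) (use lim in auto)
    then have "(\<lambda>n. \<Sum>y\<in>D. \<bar>X (r n) y - g y\<bar>) \<longlonglongrightarrow> 0" by simp
    moreover have "\<forall>n. X (r n) \<in> C" using X(1) unfolding CC by blast
    moreover have "\<forall>y. y \<notin> D \<longrightarrow> g y = 0" by (simp add: g_def)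
    ultimately show ?thesis using cl unfolding l1_closed_def
      by (elim allE[of _ "\<lambda>n. X (r n)"] allE[of _ g]) blast
  qed
  have gnn: "\<forall>y. g y \<ge> 0"
  proof
    fix y show "g y \<ge> 0"
    proof (cases "y \<in> D")
      case True
      have "\<forall>n. X (r n) y \<ge> 0" using X(1) unfolding CC by blast
      then show ?thesis using lim True by (auto intro: LIMSEQ_le_const)
    next
      case False then show ?thesis by (simp add: g_def)
    qed
  qed
  have gs: "(\<Sum>y\<in>D. g y) = 1"
  proof -
    have "(\<lambda>n. \<Sum>y\<in>D. X (r n) y) \<longlonglongrightarrow> (\<Sum>y\<in>D. g y)"
      by (intro tendsto_sum) (use lim in auto)
    moreover have "\<And>n. (\<Sum>y\<in>D. X (r n) y) = 1" using X(1) unfolding CC by blast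
    ultimately have "(\<lambda>n. 1) \<longlonglongrightarrow> (\<Sum>y\<in>D. g y)" by simp
    then show ?thesis using LIMSEQ_unique[OF tendsto_const] by metis
  qed
  have gCC: "g \<in> CC" using gC gnn gs unfolding CC by blast
  have "(\<lambda>n. F (X (r n))) \<longlonglongrightarrow> F g" by (rule Fcont) (use lim in auto)
  moreover have "(\<lambda>n. F (X (r n))) \<longlonglongrightarrow> \<sigma>"
  proof (rule tendsto_sandwich[where f="\<lambda>n. \<sigma> + - inverse (real (Suc n))" and h="\<lambda>n. \<sigma>"])
    show "\<forall>\<^sub>F n in sequentially. \<sigma> + - inverse (real (Suc n)) \<le> F (X (r n))"
    proof (rule always_eventually, rule allI)
      fix n
      have "inverse (real (Suc (r n))) \<le> inverse (real (Suc n))"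
        using seq_suble[OF r(1), of n] by (simp add: le_imp_inverse_le)
      then show "\<sigma> + - inverse (real (Suc n)) \<le> F (X (r n))" using X(2)[of "r n"] by linarith
    qed
    show "\<forall>\<^sub>F n in sequentially. F (X (r n)) \<le> \<sigma>" using up X(1) by auto
  qed (rule LIMSEQ_inverse_real_of_nat_add_minus, rule tendsto_const)
  ultimately have "F g = \<sigma>" by (rule LIMSEQ_unique)
  then show ?thesis using gCC up by auto
qed

definition Fd :: "('a \<Rightarrow> 'a \<Rightarrow> real) \<Rightarrow> 'a set \<Rightarrow> real \<Rightarrow> ('a \<Rightarrow> real) \<Rightarrow> real" where
  "Fd q D \<delta> h = (\<Sum>y\<in>D. \<Sum>y'\<in>D. q y y' * (sqrt (h y + \<delta>) * sqrt (h y' + \<delta>)))"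

lemma dsqrt_line:
  assumes "a + e > 0"
  shows "((\<lambda>s. sqrt (a + s * b + e)) has_real_derivative (b / (2 * sqrt (a + e)))) (at 0)"
proof -
  have lin: "((\<lambda>s. a + s * b + e) has_real_derivative b) (at 0)"
    by (auto intro!: derivative_eq_intros)
  have sq: "(sqrt has_real_derivative (inverse (sqrt ((\<lambda>s. a + s * b + e) 0)) / 2)) (at ((\<lambda>s. a + s * b + e) 0))"
    using assms by (intro DERIV_real_sqrt) simp
  have "((\<lambda>s. sqrt (a + s * b + e)) has_real_derivative (inverse (sqrt ((\<lambda>s. a + s * b + e) 0)) / 2) * b) (at 0)"
    using DERIV_chain2[OF sq lin] by simp
  then show ?thesis by (simp add: field_simps)
qed

lemma Fd_deriv:
  fixes q :: "'a \<Rightarrow> 'a \<Rightarrow> real"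
  assumes D: "finite D" and qs: "\<And>y y'. y \<in> D \<Longrightarrow> y' \<in> D \<Longrightarrow> q y y' = q y' y"
    and pos: "\<And>y. y \<in> D \<Longrightarrow> g y + \<delta> > 0"
  shows "((\<lambda>s. \<Sum>y\<in>D. \<Sum>y'\<in>D. q y y' * (sqrt (g y + s * b y + \<delta>) * sqrt (g y' + s * b y' + \<delta>)))
     has_real_derivative (\<Sum>y\<in>D. b y / sqrt (g y + \<delta>) * (\<Sum>y'\<in>D. q y y' * sqrt (g y' + \<delta>)))) (at 0)"
proof -
  let ?f = "\<lambda>y. sqrt (g y + \<delta>)"
  have der: "((\<lambda>s. \<Sum>y\<in>D. \<Sum>y'\<in>D. q y y' * (sqrt (g y + s * b y + \<delta>) * sqrt (g y' + s * b y' + \<delta>)))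
     has_real_derivative (\<Sum>y\<in>D. \<Sum>y'\<in>D. q y y' * (sqrt (g y + 0 * b y + \<delta>) * (b y' / (2 * sqrt (g y' + \<delta>))) +
        b y / (2 * sqrt (g y + \<delta>)) * sqrt (g y' + 0 * b y' + \<delta>)))) (at 0)"
    by (intro DERIV_sum DERIV_cmult DERIV_mult' dsqrt_line pos)
  have A: "(\<Sum>y\<in>D. \<Sum>y'\<in>D. q y y' * (?f y * (b y' / (2 * ?f y')))) =
     (\<Sum>y'\<in>D. b y' / (2 * ?f y') * (\<Sum>y\<in>D. q y' y * ?f y))"
  proof -
    have "(\<Sum>y\<in>D. \<Sum>y'\<in>D. q y y' * (?f y * (b y' / (2 * ?f y')))) =
       (\<Sum>y'\<in>D. \<Sum>y\<in>D. q y y' * (?f y * (b y' / (2 * ?f y'))))" by (rule sum.swap)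
    also have "\<dots> = (\<Sum>y'\<in>D. \<Sum>y\<in>D. b y' / (2 * ?f y') * (q y' y * ?f y))"
      by (intro sum.cong refl) (simp add: qs)
    also have "\<dots> = (\<Sum>y'\<in>D. b y' / (2 * ?f y') * (\<Sum>y\<in>D. q y' y * ?f y))"
      by (simp add: sum_distrib_left)
    finally show ?thesis .
  qed
  have B: "(\<Sum>y\<in>D. \<Sum>y'\<in>D. q y y' * (b y / (2 * ?f y) * ?f y')) =
     (\<Sum>y\<in>D. b y / (2 * ?f y) * (\<Sum>y'\<in>D. q y y' * ?f y'))"
    by (intro sum.cong refl) (simp add: sum_distrib_left sum_divide_distrib algebra_simps)
  have "(\<Sum>y\<in>D. \<Sum>y'\<in>D. q y y' * (sqrt (g y + 0 * b y + \<delta>) * (b y' / (2 * sqrt (g y' + \<delta>))) +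
        b y / (2 * sqrt (g y + \<delta>)) * sqrt (g y' + 0 * b y' + \<delta>))) =
      (\<Sum>y\<in>D. \<Sum>y'\<in>D. q y y' * (?f y * (b y' / (2 * ?f y')))) + (\<Sum>y\<in>D. \<Sum>y'\<in>D. q y y' * (b y / (2 * ?f y) * ?f y'))"
    by (simp add: sum.distrib distrib_left)
  also have "\<dots> = (\<Sum>y\<in>D. b y / ?f y * (\<Sum>y'\<in>D. q y y' * ?f y'))"
    unfolding A B by (simp add: sum.distrib[symmetric] field_simps)
  finally show ?thesis using der by simp
qed

lemma first_order:
  fixes q :: "'a \<Rightarrow> 'a \<Rightarrow> real"
  assumes D: "finite D"
    and CC: "CC = {h\<in>C. (\<forall>y. h y \<ge> 0) \<and> (\<Sum>y\<in>D. h y) = 1}"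
    and cv: "l1_convex C"
    and qs: "\<And>y y'. y \<in> D \<Longrightarrow> y' \<in> D \<Longrightarrow> q y y' = q y' y"
    and dp: "\<delta> > 0"
    and gCC: "g \<in> CC" and gmax: "\<forall>h\<in>CC. Fd q D \<delta> h \<le> Fd q D \<delta> g"
    and lCC: "l \<in> CC"
  shows "(\<Sum>y\<in>D. (l y - g y) / sqrt (g y + \<delta>) * (\<Sum>y'\<in>D. q y y' * sqrt (g y' + \<delta>))) \<le> 0"
proof (rule ccontr)
  define b where "b = (\<lambda>y. l y - g y)"
  define Fl where "Fl = (\<lambda>s. \<Sum>y\<in>D. \<Sum>y'\<in>D. q y y' * (sqrt (g y + s * b y + \<delta>) * sqrt (g y' + s * b y' + \<delta>)))"
  assume "\<not> ?thesis"
  then have pos: "(\<Sum>y\<in>D. b y / sqrt (g y + \<delta>) * (\<Sum>y'\<in>D. q y y' * sqrt (g y' + \<delta>))) > 0"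
    by (simp add: b_def)
  have gnn: "\<forall>y. g y \<ge> 0" using gCC unfolding CC by blast
  have der: "(Fl has_real_derivative (\<Sum>y\<in>D. b y / sqrt (g y + \<delta>) * (\<Sum>y'\<in>D. q y y' * sqrt (g y' + \<delta>)))) (at 0)"
    unfolding Fl_def by (rule Fd_deriv[OF D qs]) (use gnn dp in \<open>auto intro: add_nonneg_pos\<close>)
  obtain d where d: "d > 0" "\<And>h. h > 0 \<Longrightarrow> h < d \<Longrightarrow> Fl 0 < Fl (0 + h)"
    using DERIV_pos_inc_right[OF der pos] by blast
  define h where "h = min (d / 2) 1"
  have h: "h > 0" "h < d" "h \<le> 1" using d(1) by (auto simp: h_def)
  have lt: "Fl 0 < Fl h" using d(2)[OF h(1,2)] by simp
  define m where "m = (\<lambda>y. h * l y + (1 - h) * g y)"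
  have mC: "m \<in> C"
    using cv gCC lCC h unfolding l1_convex_def CC m_def by auto
  have lnn: "\<forall>y. l y \<ge> 0" and ls: "(\<Sum>y\<in>D. l y) = 1" using lCC unfolding CC by blast+
  have gs: "(\<Sum>y\<in>D. g y) = 1" using gCC unfolding CC by blast
  have mnn: "\<forall>y. m y \<ge> 0" using lnn gnn h unfolding m_def by (auto intro!: add_nonneg_nonneg mult_nonneg_nonneg)
  have ms: "(\<Sum>y\<in>D. m y) = 1"
    unfolding m_def by (simp add: sum.distrib sum_distrib_left[symmetric] ls gs)
  have mCC: "m \<in> CC" using mC mnn ms unfolding CC by blast
  have "Fl h = Fd q D \<delta> m"
    unfolding Fl_def Fd_def m_def b_def by (simp add: algebra_simps)
  moreover have "Fl 0 = Fd q D \<delta> g"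
    unfolding Fl_def Fd_def by simp
  ultimately show False using lt gmax mCC by fastforce
qed

lemma ln_ge_one_minus:
  fixes x y :: real
  assumes "x > 0" "y > 0"
  shows "ln (x / y) \<ge> 1 - y / x"
proof -
  have "ln (y / x) \<le> y / x - 1" using assms by (intro ln_le_minus_one divide_pos_pos)
  moreover have "ln (x / y) = - ln (y / x)" using assms by (simp add: ln_div)
  ultimately show ?thesis by simp
qed

lemma variational:
  fixes q :: "'a \<Rightarrow> 'a \<Rightarrow> real"
  assumes D: "finite D"
    and CC: "CC = {h\<in>C. (\<forall>y. h y \<ge> 0) \<and> (\<Sum>y\<in>D. h y) = 1}"
    and ne: "CC \<noteq> {}" and cl: "l1_closed C D" and cv: "l1_convex C"
    and qs: "\<And>y y'. y \<in> D \<Longrightarrow> y' \<in> D \<Longrightarrow> q y y' = q y' y"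
    and qnn: "\<And>y y'. y \<in> D \<Longrightarrow> y' \<in> D \<Longrightarrow> q y y' \<ge> 0"
    and qpos: "\<And>f y. y \<in> D \<Longrightarrow> (\<forall>y\<in>D. f y > 0) \<Longrightarrow> (\<Sum>y'\<in>D. q y y' * f y') > 0"
    and dp: "\<delta> > 0"
  shows "\<exists>g\<in>CC. \<exists>f. (\<forall>y\<in>D. f y > 0) \<and>
     (\<forall>l\<in>CC. 1 - Fd q D \<delta> g \<le> (\<Sum>y\<in>D. l y * ln (f y / (\<Sum>y'\<in>D. q y y' * f y'))))"
proof -
  have Fcont: "(\<lambda>n. Fd q D \<delta> (X n)) \<longlonglongrightarrow> Fd q D \<delta> g" if "\<forall>y\<in>D. (\<lambda>n. X n y) \<longlonglongrightarrow> g y" for X g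
    unfolding Fd_def using that by (intro tendsto_sum tendsto_mult tendsto_const tendsto_real_sqrt tendsto_add) auto
  have Fbdd: "Fd q D \<delta> h \<le> (\<Sum>y\<in>D. \<Sum>y'\<in>D. q y y' * (1 + \<delta>))" if "h \<in> CC" for h
  proof -
    have hnn: "\<forall>y. h y \<ge> 0" and hs: "(\<Sum>y\<in>D. h y) = 1" using that unfolding CC by blast+
    have h1: "y \<in> D \<Longrightarrow> h y \<le> 1" for y
      using member_le_sum[of y D h] hnn hs D by auto
    have "sqrt (h y + \<delta>) * sqrt (h y' + \<delta>) \<le> sqrt (1 + \<delta>) * sqrt (1 + \<delta>)" if "y \<in> D" "y' \<in> D" for y y'
      using h1[OF that(1)] h1[OF that(2)] hnn dp by (intro mult_mono) auto
    then show ?thesis unfolding Fd_def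
      by (intro sum_mono) (use dp in \<open>auto intro!: mult_left_mono qnn\<close>)
  qed
  obtain g where gCC: "g \<in> CC" and gmax: "\<forall>h\<in>CC. Fd q D \<delta> h \<le> Fd q D \<delta> g"
    using exists_max[OF D CC ne cl, of "Fd q D \<delta>"] Fcont Fbdd by blast
  have gnn: "\<forall>y. g y \<ge> 0" using gCC unfolding CC by blast
  define f where "f = (\<lambda>y. sqrt (g y + \<delta>))"
  have fpos: "\<forall>y\<in>D. f y > 0" unfolding f_def using gnn dp by (auto intro: add_nonneg_pos)
  define Qf where "Qf = (\<lambda>y. \<Sum>y'\<in>D. q y y' * f y')"
  have Qfpos: "y \<in> D \<Longrightarrow> Qf y > 0" for y unfolding Qf_def using qpos fpos by blast
  have "1 - Fd q D \<delta> g \<le> (\<Sum>y\<in>D. l y * ln (f y / Qf y))" if lCC: "l \<in> CC" for l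
  proof -
    have lnn: "\<forall>y. l y \<ge> 0" and ls: "(\<Sum>y\<in>D. l y) = 1" using lCC unfolding CC by blast+
    have fo: "(\<Sum>y\<in>D. (l y - g y) / f y * Qf y) \<le> 0"
      using first_order[OF D CC cv qs dp gCC gmax lCC] unfolding f_def Qf_def .
    have "(\<Sum>y\<in>D. l y * (1 - Qf y / f y)) \<le> (\<Sum>y\<in>D. l y * ln (f y / Qf y))"
      by (intro sum_mono mult_left_mono ln_ge_one_minus) (use fpos Qfpos lnn in auto)
    moreover have "(\<Sum>y\<in>D. l y * (1 - Qf y / f y)) = 1 - (\<Sum>y\<in>D. l y * Qf y / f y)"
      by (simp add: algebra_simps sum_subtractf ls)
    moreover have "(\<Sum>y\<in>D. l y * Qf y / f y) \<le> (\<Sum>y\<in>D. g y * Qf y / f y)"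
    proof -
      have "(\<Sum>y\<in>D. (l y - g y) / f y * Qf y) = (\<Sum>y\<in>D. l y * Qf y / f y) - (\<Sum>y\<in>D. g y * Qf y / f y)"
        by (simp add: sum_subtractf[symmetric] field_simps diff_divide_distrib)
      then show ?thesis using fo by simp
    qed
    moreover have "(\<Sum>y\<in>D. g y * Qf y / f y) \<le> (\<Sum>y\<in>D. (g y + \<delta>) * Qf y / f y)"
      by (intro sum_mono divide_right_mono mult_right_mono) (use fpos Qfpos dp in \<open>auto intro: less_imp_le\<close>)
    moreover have "(\<Sum>y\<in>D. (g y + \<delta>) * Qf y / f y) = (\<Sum>y\<in>D. f y * Qf y)"
    proof (intro sum.cong refl)
      fix y assume "y \<in> D"
      have "f y * f y = g y + \<delta>" unfolding f_def using gnn dp by (simp add: add_nonneg_pos less_imp_le)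
      then show "(g y + \<delta>) * Qf y / f y = f y * Qf y" using fpos \<open>y \<in> D\<close> by (metis nonzero_mult_div_cancel_left less_irrefl mult.commute times_divide_eq_left)
    qed
    moreover have "(\<Sum>y\<in>D. f y * Qf y) = Fd q D \<delta> g"
      unfolding Fd_def Qf_def f_def by (simp add: sum_distrib_left algebra_simps)
    ultimately show ?thesis by linarith
  qed
  then show ?thesis using gCC fpos unfolding Qf_def by blast
qed



lemma sqrt_prod_delta:
  fixes a b \<delta> :: real
  assumes "0 \<le> a" "a \<le> 1" "0 \<le> b" "b \<le> 1" "\<delta> > 0"
  shows "sqrt (a + \<delta>) * sqrt (b + \<delta>) \<le> sqrt a * sqrt b + (2 * sqrt \<delta> + \<delta>)"
proof -
  have A: "sqrt (a + \<delta>) \<le> sqrt a + sqrt \<delta>" using assms by (intro sqrt_add_le_add_sqrt) auto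
  have B: "sqrt (b + \<delta>) \<le> sqrt b + sqrt \<delta>" using assms by (intro sqrt_add_le_add_sqrt) auto
  have s2: "sqrt a + sqrt b \<le> 2"
    using assms real_sqrt_le_1_iff[of a] real_sqrt_le_1_iff[of b] by linarith
  have s3: "sqrt \<delta> * (sqrt a + sqrt b) \<le> sqrt \<delta> * 2"
    using assms s2 by (intro mult_left_mono) auto
  have "sqrt (a + \<delta>) * sqrt (b + \<delta>) \<le> (sqrt a + sqrt \<delta>) * (sqrt b + sqrt \<delta>)"
    using A B assms by (intro mult_mono) auto
  also have "\<dots> = sqrt a * sqrt b + sqrt \<delta> * (sqrt a + sqrt b) + sqrt \<delta> * sqrt \<delta>"
    by (simp add: algebra_simps)
  also have "sqrt \<delta> * sqrt \<delta> = \<delta>" using assms by simp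
  finally show ?thesis using s3 by simp
qed

lemma Fd_delta_bound:
  fixes q :: "'a \<Rightarrow> 'a \<Rightarrow> real"
  assumes D: "finite D"
    and qnn: "\<And>y y'. y \<in> D \<Longrightarrow> y' \<in> D \<Longrightarrow> q y y' \<ge> 0"
    and rs: "\<And>y. y \<in> D \<Longrightarrow> (\<Sum>y'\<in>D. q y y') \<le> 1"
    and gnn: "\<forall>y. g y \<ge> 0" and gs: "(\<Sum>y\<in>D. g y) = 1" and dp: "\<delta> > 0"
  shows "Fd q D \<delta> g \<le> Fd q D 0 g + (2 * sqrt \<delta> + \<delta>) * real (card D)"
proof -
  have g1: "y \<in> D \<Longrightarrow> g y \<le> 1" for y
    using member_le_sum[of y D g] gnn gs D by auto
  have "Fd q D \<delta> g \<le> (\<Sum>y\<in>D. \<Sum>y'\<in>D. q y y' * (sqrt (g y) * sqrt (g y') + (2 * sqrt \<delta> + \<delta>)))"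
    unfolding Fd_def
    by (intro sum_mono mult_left_mono sqrt_prod_delta) (use gnn g1 dp qnn in auto)
  also have "\<dots> = Fd q D 0 g + (\<Sum>y\<in>D. (\<Sum>y'\<in>D. q y y') * (2 * sqrt \<delta> + \<delta>))"
    unfolding Fd_def by (simp add: distrib_left sum.distrib sum_distrib_right)
  also have "(\<Sum>y\<in>D. (\<Sum>y'\<in>D. q y y') * (2 * sqrt \<delta> + \<delta>)) \<le> (\<Sum>y\<in>D. 1 * (2 * sqrt \<delta> + \<delta>))"
    by (intro sum_mono mult_right_mono rs) (use dp in auto)
  finally show ?thesis by (simp add: mult.commute)
qed

lemma Q_adj:
  fixes D :: "('d::finite \<Rightarrow> int) set"
  assumes D: "finite D" and y: "y \<in> D" "y' \<in> D" and a: "adj y y'"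
  shows "Q D y y' \<ge> 1 / real (card (unit_steps :: ('d \<Rightarrow> int) set))"
proof -
  have s0: "y' - y \<in> unit_steps" using a adj_sym[of y y'] by (simp add: adj_iff)
  have "(if y + (y' - y) = y' then 1 else (0::real)) \<le> (\<Sum>s\<in>unit_steps. if y + s = y' then 1 else 0)"
    by (rule member_le_sum[OF s0]) (simp_all add: finite_unit_steps)
  then have "1 \<le> (\<Sum>s\<in>(unit_steps :: ('d \<Rightarrow> int) set). if y + s = y' then 1 else (0::real))" by simp
  also have "\<dots> \<le> (\<Sum>s\<in>unit_steps. (if y + s = y' then 1 else 0) + H D (y + s) y')"
    by (intro sum_mono) (use H_nonneg'[OF D y(2)] in auto)
  finally show ?thesis unfolding Q_def using NU_pos by (simp add: divide_right_mono)
qed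

lemma energy_pairs:
  fixes e :: "('d::finite \<Rightarrow> int) \<Rightarrow> real"
  assumes D: "finite D"
  shows "energy e D = (1 / (2 * real CARD('d))) *
     (\<Sum>y\<in>D. \<Sum>z\<in>D. if adj y z then (e y - e z)^2 else 0)"
proof -
  have "{(y,z). y \<in> D \<and> z \<in> D \<and> adj y z} = {p\<in>D \<times> D. adj (fst p) (snd p)}" by auto
  then have "(\<Sum>(y,z)\<in>{(y,z). y \<in> D \<and> z \<in> D \<and> adj y z}. (e y - e z)^2) =
     (\<Sum>p\<in>D \<times> D. if adj (fst p) (snd p) then (e (fst p) - e (snd p))^2 else 0)"
    using D by (simp add: sum.inter_filter case_prod_beta)
  also have "\<dots> = (\<Sum>y\<in>D. \<Sum>z\<in>D. if adj y z then (e y - e z)^2 else 0)"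
    by (simp add: sum.cartesian_product case_prod_beta)
  finally show ?thesis unfolding energy_def by simp
qed

lemma energy_le_Fd0:
  fixes D :: "('d::finite \<Rightarrow> int) set"
  assumes D: "finite D" and gnn: "\<forall>y. g y \<ge> 0" and gs: "(\<Sum>y\<in>D. g y) = 1"
  shows "energy (\<lambda>y. sqrt (g y)) D / 2 \<le> 1 - Fd (Q D) D 0 g"
proof -
  define e where "e = (\<lambda>y. sqrt (g y))"
  let ?N = "real (card (unit_steps :: ('d \<Rightarrow> int) set))"
  have ee: "(e y)^2 = g y" for y unfolding e_def using gnn by simp
  have Fd0: "Fd (Q D) D 0 g = (\<Sum>y\<in>D. \<Sum>y'\<in>D. Q D y y' * (e y * e y'))"
    unfolding Fd_def e_def by simp
  define S1 where "S1 = (\<Sum>y\<in>D. \<Sum>y'\<in>D. Q D y y' * (e y)^2)"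
  have S1le: "S1 \<le> 1"
  proof -
    have "S1 = (\<Sum>y\<in>D. (\<Sum>y'\<in>D. Q D y y') * (e y)^2)"
      unfolding S1_def by (simp add: sum_distrib_right)
    also have "\<dots> \<le> (\<Sum>y\<in>D. 1 * (e y)^2)"
      by (intro sum_mono mult_right_mono Q_rowsum[OF D]) auto
    also have "\<dots> = 1" using gs by (simp add: ee)
    finally show ?thesis .
  qed
  have S2: "(\<Sum>y\<in>D. \<Sum>y'\<in>D. Q D y y' * (e y')^2) = S1"
  proof -
    have "(\<Sum>y\<in>D. \<Sum>y'\<in>D. Q D y y' * (e y')^2) = (\<Sum>y'\<in>D. \<Sum>y\<in>D. Q D y y' * (e y')^2)"
      by (rule sum.swap)
    also have "\<dots> = S1" unfolding S1_def
      by (intro sum.cong refl) (simp add: Q_sym[OF D])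
    finally show ?thesis .
  qed
  have sq: "(\<Sum>y\<in>D. \<Sum>y'\<in>D. Q D y y' * (e y - e y')^2) = 2 * S1 - 2 * Fd (Q D) D 0 g"
  proof -
    have "(\<Sum>y\<in>D. \<Sum>y'\<in>D. Q D y y' * (e y - e y')^2) =
      (\<Sum>y\<in>D. \<Sum>y'\<in>D. Q D y y' * (e y)^2 + Q D y y' * (e y')^2 - 2 * (Q D y y' * (e y * e y')))"
      by (intro sum.cong refl) (simp add: power2_diff algebra_simps)
    also have "\<dots> = S1 + (\<Sum>y\<in>D. \<Sum>y'\<in>D. Q D y y' * (e y')^2) - 2 * Fd (Q D) D 0 g"
      unfolding S1_def Fd0 by (simp add: sum.distrib sum_subtractf sum_distrib_left)
    finally show ?thesis using S2 by simp
  qed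
  have Nle: "?N \<le> 2 * real CARD('d)" using card_unit_steps[where 'd='d] by linarith
  have Npos: "?N > 0" by (rule NU_pos)
  have "energy e D = (\<Sum>y\<in>D. \<Sum>z\<in>D. (1 / (2 * real CARD('d))) * (if adj y z then (e y - e z)^2 else 0))"
    unfolding energy_pairs[OF D] by (simp add: sum_distrib_left)
  also have "\<dots> \<le> (\<Sum>y\<in>D. \<Sum>z\<in>D. Q D y z * (e y - e z)^2)"
  proof (intro sum_mono)
    fix y z assume y: "y \<in> D" and z: "z \<in> D"
    show "(1 / (2 * real CARD('d))) * (if adj y z then (e y - e z)^2 else 0) \<le> Q D y z * (e y - e z)^2"
    proof (cases "adj y z")
      case True
      have "1 / (2 * real CARD('d)) \<le> 1 / ?N" using Nle Npos by (simp add: frac_le)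
      also have "\<dots> \<le> Q D y z" by (rule Q_adj[OF D y z True])
      finally have "1 / (2 * real CARD('d)) * (e y - e z)^2 \<le> Q D y z * (e y - e z)^2"
        by (rule mult_right_mono) simp
      then show ?thesis using True by simp
    next
      case False then show ?thesis using Q_nonneg[OF D z] by simp
    qed
  qed
  also have "\<dots> = 2 * S1 - 2 * Fd (Q D) D 0 g" by (rule sq)
  finally have "energy e D \<le> 2 * S1 - 2 * Fd (Q D) D 0 g" .
  then show ?thesis using S1le unfolding e_def by simp
qed

lemma Q_qpos:
  fixes D :: "('d::finite \<Rightarrow> int) set"
  assumes D: "finite D" and y: "y \<in> D" and f: "\<forall>y\<in>D. f y > 0"
  shows "(\<Sum>y'\<in>D. Q D y y' * f y') > 0"
proof -
  have "(\<Sum>y'\<in>D. Q D y y' * f y') = (\<Sum>s\<in>unit_steps. uf D f (y + s)) / real (card (unit_steps :: ('d \<Rightarrow> int) set))"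
    by (rule uf_Q[OF D, symmetric])
  moreover have "(\<Sum>s\<in>(unit_steps :: ('d \<Rightarrow> int) set). uf D f (y + s)) > 0"
  proof (rule sum_pos[OF finite_unit_steps unit_steps_ne])
    fix s :: "'d \<Rightarrow> int" assume "s \<in> unit_steps"
    then have ys: "y + s \<in> closure_nb D" using y unfolding closure_nb_eq by auto
    show "uf D f (y + s) > 0" by (rule uf_pos[OF D _ ys]) (use f in auto)
  qed
  moreover have "real (card (unit_steps :: ('d \<Rightarrow> int) set)) > 0" by (rule NU_pos)
  ultimately show ?thesis by (simp add: divide_pos_pos)
qed



lemma limit_aux:
  fixes L :: ereal and Ir c :: real and t :: nat
  assumes "\<And>\<delta>. \<delta> > 0 \<Longrightarrow> L \<le> ereal (exp (- real t * (Ir - (2 * sqrt \<delta> + \<delta>) * c)))"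
  shows "L \<le> ereal (exp (- real t * Ir))"
proof -
  have "((\<lambda>\<delta>. exp (- real t * (Ir - (2 * sqrt \<delta> + \<delta>) * c))) \<longlongrightarrow> exp (- real t * (Ir - (2 * sqrt 0 + 0) * c))) (at_right 0)"
    by (intro tendsto_intros tendsto_real_sqrt tendsto_ident_at)
  then have lim: "((\<lambda>\<delta>. ereal (exp (- real t * (Ir - (2 * sqrt \<delta> + \<delta>) * c)))) \<longlongrightarrow> ereal (exp (- real t * Ir))) (at_right 0)"
    by simp
  have ev: "eventually (\<lambda>\<delta>. L \<le> ereal (exp (- real t * (Ir - (2 * sqrt \<delta> + \<delta>) * c)))) (at_right (0::real))"
    by (rule eventually_at_rightI[where b=1]) (use assms in auto)
  show ?thesis by (rule tendsto_lowerbound[OF lim ev]) simp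
qed

lemma energy_nonneg: "energy f D \<ge> 0"
  unfolding energy_def by (intro mult_nonneg_nonneg sum_nonneg) (auto simp: case_prod_beta)

lemma event_CC:
  fixes D :: "('d::finite \<Rightarrow> int) set"
  assumes D: "finite D" and t: "t \<ge> 1"
    and w: "tau_fin x \<omega> D t" "(\<lambda>y. locTD x \<omega> D t y / real t) \<in> C"
  shows "(\<lambda>y. locTD x \<omega> D t y / real t) \<in> {h\<in>C. (\<forall>y. h y \<ge> 0) \<and> (\<Sum>y\<in>D. h y) = 1}"
proof -
  have ex: "\<exists>k. k \<ge> 1 \<and> locD x \<omega> k D = t" using w(1) unfolding tau_fin_def by blast
  have "locD x \<omega> (tau x \<omega> D t) D = t"
    unfolding tau_def using LeastI_ex[OF ex] by blast
  then have "(\<Sum>y\<in>D. real (loc x \<omega> (tau x \<omega> D t) y)) = real t"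
    unfolding locD_def by (metis of_nat_sum)
  then have "(\<Sum>y\<in>D. locTD x \<omega> D t y / real t) = 1"
    using t by (simp add: locTD_def sum_divide_distrib[symmetric])
  moreover have "\<forall>y. locTD x \<omega> D t y / real t \<ge> 0" by (simp add: locTD_def)
  ultimately show ?thesis using w(2) by blast
qed

theorem theorem1p4:
  fixes D :: "('d::finite \<Rightarrow> int) set"
    and C :: "(('d \<Rightarrow> int) \<Rightarrow> real) set"
    and t :: nat
  assumes "CARD('d) \<ge> 3"
    and "finite D" and "D \<noteq> {}"
    and "l1_set C D" and "l1_convex C" and "l1_closed C D"
    and "t \<ge> 1"
  shows "(INF x\<in>closure_nb D. ereal (measure srw_steps
            {\<omega>. tau_fin x \<omega> D t \<and> (\<lambda>y. locTD x \<omega> D t y / real t) \<in> C}))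
         \<le> (let I = (INF h\<in>{h\<in>C. \<forall>y. h y \<ge> 0}. ereal (energy (\<lambda>y. sqrt (h y)) D / 2))
            in if I = \<infinity> then 0 else ereal (exp (- real t * real_of_ereal I)))"
proof -
  note D = assms(2,3) and cv = assms(5) and cl = assms(6) and t = assms(7)
  define CC where "CC = {h\<in>C. (\<forall>y. h y \<ge> 0) \<and> (\<Sum>y\<in>D. h y) = 1}"
  define I where "I = (INF h\<in>{h\<in>C. \<forall>y. h y \<ge> 0}. ereal (energy (\<lambda>y. sqrt (h y)) D / 2))"
  let ?L = "(INF x\<in>closure_nb D. ereal (measure srw_steps
            {\<omega>. tau_fin x \<omega> D t \<and> (\<lambda>y. locTD x \<omega> D t y / real t) \<in> C}))"
  let ?R = "(let I = (INF h\<in>{h\<in>C. \<forall>y. h y \<ge> 0}. ereal (energy (\<lambda>y. sqrt (h y)) D / 2))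
            in if I = \<infinity> then 0 else ereal (exp (- real t * real_of_ereal I)))"
  have Rnn: "0 \<le> ?R" by (simp add: Let_def)
  have Lle: "?L \<le> ereal (measure srw_steps {\<omega>. tau_fin x \<omega> D t \<and> (\<lambda>y. locTD x \<omega> D t y / real t) \<in> C})"
    if "x \<in> closure_nb D" for x
    using that by (rule INF_lower)
  show ?thesis
  proof (cases "CC = {}")
    case True
    obtain x0 where x0: "x0 \<in> D" using D(2) by blast
    then have x0c: "x0 \<in> closure_nb D" by (simp add: closure_nb_def)
    have "{\<omega>. tau_fin x0 \<omega> D t \<and> (\<lambda>y. locTD x0 \<omega> D t y / real t) \<in> C} = {}"
    proof (rule equals0I)
      fix \<omega> assume "\<omega> \<in> {\<omega>. tau_fin x0 \<omega> D t \<and> (\<lambda>y. locTD x0 \<omega> D t y / real t) \<in> C}"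
      then have "(\<lambda>y. locTD x0 \<omega> D t y / real t) \<in> CC"
        unfolding CC_def by (intro event_CC[OF D(1) t]) auto
      then show False using True by simp
    qed
    then have "?L \<le> ereal 0" using Lle[OF x0c] by (simp only: measure_empty)
    then have "?L \<le> 0" by (simp only: zero_ereal_def)
    then show ?thesis using Rnn by (rule order.trans)
  next
    case False
    then obtain h0 where h0: "h0 \<in> CC" by blast
    have I_le: "I \<le> ereal (energy (\<lambda>y. sqrt (h y)) D / 2)" if "h \<in> CC" for h
      unfolding I_def by (rule INF_lower) (use that in \<open>auto simp: CC_def\<close>)
    have I_ge: "0 \<le> I" unfolding I_def by (rule INF_greatest) (simp add: energy_nonneg)
    have Ifin: "\<bar>I\<bar> \<noteq> \<infinity>" using I_le[OF h0] I_ge by auto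
    define Ir where "Ir = real_of_ereal I"
    have IIr: "I = ereal Ir" unfolding Ir_def using Ifin by (simp add: ereal_real)
    have Ir_le: "Ir \<le> energy (\<lambda>y. sqrt (h y)) D / 2" if "h \<in> CC" for h
      using I_le[OF that] unfolding IIr by simp
    have R: "?R = ereal (exp (- real t * Ir))" unfolding I_def[symmetric] IIr by simp
    have "?L \<le> ereal (exp (- real t * (Ir - (2 * sqrt \<delta> + \<delta>) * real (card D))))" if dp: "\<delta> > 0" for \<delta>
    proof -
      have qs: "\<And>y y'. y \<in> D \<Longrightarrow> y' \<in> D \<Longrightarrow> Q D y y' = Q D y' y" by (rule Q_sym[OF D(1)])
      have qnn: "\<And>y y'. y \<in> D \<Longrightarrow> y' \<in> D \<Longrightarrow> Q D y y' \<ge> 0" by (rule Q_nonneg[OF D(1)])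
      have qpos: "\<And>f y. y \<in> D \<Longrightarrow> (\<forall>y\<in>D. f y > 0) \<Longrightarrow> (\<Sum>y'\<in>D. Q D y y' * f y') > 0"
        by (rule Q_qpos[OF D(1)])
      obtain g f where gCC: "g \<in> CC" and fpos: "\<forall>y\<in>D. f y > 0"
        and var: "\<forall>l\<in>CC. 1 - Fd (Q D) D \<delta> g \<le> (\<Sum>y\<in>D. l y * ln (f y / (\<Sum>y'\<in>D. Q D y y' * f y')))"
        using variational[OF D(1) CC_def False cl cv qs qnn qpos dp] by blast
      have gnn: "\<forall>y. g y \<ge> 0" and gs: "(\<Sum>y\<in>D. g y) = 1" using gCC unfolding CC_def by blast+
      define m where "m = Ir - (2 * sqrt \<delta> + \<delta>) * real (card D)"
      have "m \<le> 1 - Fd (Q D) D \<delta> g"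
      proof -
        have "Fd (Q D) D \<delta> g \<le> Fd (Q D) D 0 g + (2 * sqrt \<delta> + \<delta>) * real (card D)"
          by (rule Fd_delta_bound[OF D(1) qnn Q_rowsum[OF D(1)] gnn gs dp])
        moreover have "energy (\<lambda>y. sqrt (g y)) D / 2 \<le> 1 - Fd (Q D) D 0 g"
          by (rule energy_le_Fd0[OF D(1) gnn gs])
        moreover have "Ir \<le> energy (\<lambda>y. sqrt (g y)) D / 2" by (rule Ir_le[OF gCC])
        ultimately show ?thesis unfolding m_def by linarith
      qed
      have mC: "m \<le> (\<Sum>y\<in>D. l y * ln (f y / (\<Sum>y'\<in>D. Q D y y' * f y')))"
        if "l \<in> C" "\<forall>y. l y \<ge> 0" "(\<Sum>y\<in>D. l y) = 1" for l
      proof -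
        have "l \<in> CC" using that unfolding CC_def by blast
        then show ?thesis using var \<open>m \<le> 1 - Fd (Q D) D \<delta> g\<close> by fastforce
      qed
      obtain x where x: "x \<in> closure_nb D"
        and mx: "measure srw_steps {\<omega>. tau_fin x \<omega> D t \<and> (\<lambda>y. locTD x \<omega> D t y / real t) \<in> C} \<le> exp (- real t * m)"
        using prob_bound[OF D t, of f C m] fpos mC by blast
      have "?L \<le> ereal (measure srw_steps {\<omega>. tau_fin x \<omega> D t \<and> (\<lambda>y. locTD x \<omega> D t y / real t) \<in> C})"
        by (rule Lle[OF x])
      also have "\<dots> \<le> ereal (exp (- real t * m))" using mx by simp
      finally show ?thesis unfolding m_def .
    qed
    then have "?L \<le> ereal (exp (- real t * Ir))" by (rule limit_aux)
    then show ?thesis unfolding R .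
  qed
qed


end
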